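(* Let $Y_1,Y_2,\ldots,Y_n$ be $n$ independent random variables such that $Y_j$ follows the Mittag-Leffler distribution with distribution function $F_{Y_j}(t)=1-E_{\nu_j}(-\lambda_jt^{\nu_j})$, $t\ge0$, where $\lambda_j>0$, $0<\nu_j\leq1$ for $1\leq j\leq n$, and $\nu_1=\lambda_n=1$. Then the density function of $W=Y_1+Y_2+\cdots+Y_n$ is $$f_W(t)=(-1)^{n-1}\lambda_1\sum_{k=n-1}^{\infty}(-1)^k\sum_{\Lambda^k_n}\frac{t^{k_1+\sum_{j=2}^nk_j\nu_j}\prod_{j=1}^{n-1}\lambda_j^{k_j}}{\Gamma\big(1+k_1+\sum_{j=2}^nk_j\nu_j\big)},\qquad t\geq0,$$ where $\Lambda^k_n=\{(k_1,k_2,\ldots,k_n):\ \sum_{j=1}^nk_j=k,\ k_1\in\mathbb{N}_0,\ k_j\in\mathbb{N}_0\setminus\{0\} \text{ for } 2\leq j\leq n\}$.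
   Context: $\mathbb{N}_0$ denotes the set of nonnegative integers. $E_{\beta}(x)=\sum_{k=0}^{\infty}\frac{x^k}{\Gamma(k\beta+1)}$ is the Mittag-Leffler function. *)

theory Defs
  imports "HOL-Probability.Probability"
begin

definition mittag_leffler :: "real \<Rightarrow> real \<Rightarrow> real" where
  "mittag_leffler \<beta> x = (\<Sum>k. x ^ k / Gamma (real k * \<beta> + 1))"

definition pow0 :: "real \<Rightarrow> real \<Rightarrow> real" where
  "pow0 t a = (if a = 0 then 1 else t powr a)"

definition Lambda_set :: "nat \<Rightarrow> nat \<Rightarrow> (nat \<Rightarrow> nat) set" where
  "Lambda_set n k = {\<kappa>. (\<forall>j. j \<notin> {1..n} \<longrightarrow> \<kappa> j = 0) \<and>
                         (\<forall>j\<in>{2..n}. 1 \<le> \<kappa> j) \<and> (\<Sum>j=1..n. \<kappa> j) = k}"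

definition fW_term :: "nat \<Rightarrow> (nat \<Rightarrow> real) \<Rightarrow> (nat \<Rightarrow> real) \<Rightarrow> real \<Rightarrow> nat \<Rightarrow> real" where
  "fW_term n lam nu t k = (-1) ^ k *
     (\<Sum>\<kappa>\<in>Lambda_set n k.
        pow0 t (real (\<kappa> 1) + (\<Sum>j=2..n. real (\<kappa> j) * nu j)) * (\<Prod>j=1..n-1. lam j ^ \<kappa> j)
        / Gamma (1 + real (\<kappa> 1) + (\<Sum>j=2..n. real (\<kappa> j) * nu j)))"

end

theory Submission
  imports Defs "HOL-Real_Asymp.Real_Asymp"
begin

definition gk :: "real \<Rightarrow> real \<Rightarrow> real" where
  "gk a t = (if 0 < t then t powr (a - 1) / Gamma a else 0)"

lemma gk_nonneg: "0 < a \<Longrightarrow> 0 \<le> gk a t"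
  by (simp add: gk_def Gamma_real_pos)

lemma gk_measurable[measurable]: "gk a \<in> borel_measurable borel"
  unfolding gk_def by measurable

lemma gk_nonpos[simp]: "t \<le> 0 \<Longrightarrow> gk a t = 0"
  by (simp add: gk_def)

lemma gconv_has_integral_pos:
  assumes a: "0 < a" and b: "0 < b" and x: "0 < x"
  shows "((\<lambda>y. gk a (x - y) * gk b y) has_integral gk (a + b) x) UNIV"
proof -
  let ?f = "\<lambda>s::real. s powr (b - 1) * (1 - s) powr (a - 1)"
  have B: "(?f has_integral Beta b a) (cbox 0 1)"
    using has_integral_Beta_real[OF b a] by simp
  have "((\<lambda>y. ?f ((1/x) *\<^sub>R y + 0)) has_integral (Beta b a /\<^sub>R (1/x) ^ DIM(real)))
          (cbox ((0 - 0) /\<^sub>R (1/x)) ((1 - 0) /\<^sub>R (1/x)))"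
    by (rule has_integral_affinity'[OF B]) (use x in simp)
  hence B2: "((\<lambda>y. ?f (y / x)) has_integral (x * Beta b a)) {0..x}"
    by simp
  have B3: "((\<lambda>y. x powr (a + b - 2) / (Gamma a * Gamma b) * ?f (y / x)) has_integral
            (x powr (a + b - 2) / (Gamma a * Gamma b) * (x * Beta b a))) {0..x}"
    by (rule has_integral_mult_right[OF B2])
  have val: "x powr (a + b - 2) / (Gamma a * Gamma b) * (x * Beta b a) = gk (a + b) x"
  proof -
    have "Gamma a > 0" "Gamma b > 0" "Gamma (a+b) > 0" using a b by (auto intro: Gamma_real_pos)
    moreover have "x powr (a + b - 2) * x = x powr (a + b - 1)"
    proof -
      have "x powr (a + b - 1) = x powr ((a + b - 2) + 1)" by simp
      also have "\<dots> = x powr (a + b - 2) * x powr 1" by (rule powr_add)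
      finally show ?thesis using x by simp
    qed
    ultimately show ?thesis using x
      by (simp add: gk_def Beta_def field_simps)
  qed
  have B4: "((\<lambda>y. gk a (x - y) * gk b y) has_integral gk (a + b) x) {0..x}"
  proof (rule has_integral_spike[OF _ _ B3[unfolded val]])
    show "negligible {0, x}" by simp
    fix y assume y: "y \<in> {0..x} - {0, x}"
    hence y0: "0 < y" "y < x" by auto
    have "?f (y / x) = (y / x) powr (b - 1) * ((x - y) / x) powr (a - 1)"
      using x by (simp add: field_simps)
    also have "\<dots> = y powr (b - 1) * (x - y) powr (a - 1) / (x powr (b - 1) * x powr (a - 1))"
      using x y0 by (simp add: powr_divide)
    also have "x powr (b - 1) * x powr (a - 1) = x powr (a + b - 2)"
      using x by (simp add: powr_add[symmetric] add.commute)
    finally have "?f (y / x) = y powr (b - 1) * (x - y) powr (a - 1) / x powr (a + b - 2)" .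
    then show "gk a (x - y) * gk b y = x powr (a + b - 2) / (Gamma a * Gamma b) * ?f (y / x)"
      using x y0 by (simp add: gk_def field_simps)
  qed
  show ?thesis
    by (rule has_integral_on_superset[OF B4]) (auto simp: gk_def)
qed

lemma gconv_has_integral:
  assumes a: "0 < a" and b: "0 < b"
  shows "((\<lambda>y. gk a (x - y) * gk b y) has_integral gk (a + b) x) UNIV"
proof (cases "0 < x")
  case True thus ?thesis using gconv_has_integral_pos[OF a b] by blast
next
  case False
  hence "(\<lambda>y. gk a (x - y) * gk b y) = (\<lambda>_. 0)" by (auto simp: gk_def fun_eq_iff)
  thus ?thesis using False by (simp add: gk_def)
qed

lemma gconv_integrable:
  assumes a: "0 < a" and b: "0 < b"
  shows "integrable lborel (\<lambda>y. gk a (x - y) * gk b y)"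
    and "(\<integral>y. gk a (x - y) * gk b y \<partial>lborel) = gk (a + b) x"
proof -
  have nn: "(\<integral>\<^sup>+y. ennreal (gk a (x - y) * gk b y) \<partial>lborel) = ennreal (gk (a + b) x)"
    by (rule nn_integral_has_integral_lborel[OF _ _ gconv_has_integral[OF a b]])
       (use a b in \<open>auto intro!: mult_nonneg_nonneg gk_nonneg\<close>)
  have "integrable lborel (\<lambda>y. gk a (x - y) * gk b y) \<and>
        (\<integral>y. gk a (x - y) * gk b y \<partial>lborel) = gk (a + b) x"
    by (rule nn_integral_eq_integrable[THEN iffD1, OF _ _ _ nn])
       (use a b in \<open>auto intro!: mult_nonneg_nonneg gk_nonneg\<close>)
  thus "integrable lborel (\<lambda>y. gk a (x - y) * gk b y)"
    and "(\<integral>y. gk a (x - y) * gk b y \<partial>lborel) = gk (a + b) x" by auto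
qed

lemma Gamma_lower:
  fixes a :: real
  assumes a: "1 \<le> a"
  shows "a powr (a - 1) * exp (- (a + 1)) \<le> Gamma a"
proof -
  let ?f = "\<lambda>t::real. t powr (a - 1) / exp t"
  have I: "(?f has_integral Gamma a) {0..}" using Gamma_integral_real a by simp
  have int1: "?f integrable_on {a..a+1}"
    by (rule integrable_continuous_interval) (use a in \<open>auto intro!: continuous_intros\<close>)
  have "integral {a..a+1} ?f \<le> integral {0..} ?f"
    by (rule integral_subset_le) (use a I int1 in \<open>auto simp: has_integral_integrable\<close>)
  also have "\<dots> = Gamma a" using I by (simp add: integral_unique)
  finally have 1: "integral {a..a+1} ?f \<le> Gamma a" .
  have "integral {a..a+1} (\<lambda>_. a powr (a - 1) * exp (- (a + 1))) \<le> integral {a..a+1} ?f"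
  proof (rule integral_le)
    fix t assume t: "t \<in> {a..a+1}"
    have "a powr (a - 1) \<le> t powr (a - 1)" using a t by (intro powr_mono2) auto
    moreover have "exp (- (a + 1)) \<le> 1 / exp t"
    proof -
      have "exp (- (a + 1)) \<le> exp (- t)" using t by simp
      thus ?thesis by (simp add: exp_minus inverse_eq_divide)
    qed
    ultimately have "a powr (a - 1) * exp (- (a + 1)) \<le> t powr (a - 1) * (1 / exp t)"
      by (intro mult_mono) auto
    thus "a powr (a - 1) * exp (- (a + 1)) \<le> ?f t" by simp
  qed (use int1 in auto)
  also have "integral {a..a+1} (\<lambda>_. a powr (a - 1) * exp (- (a + 1))) = a powr (a - 1) * exp (- (a + 1))"
    by simp
  finally show ?thesis using 1 by linarith
qed

lemma inv_Gamma_bound: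
  fixes n :: nat and \<nu> e :: real
  assumes nu: "0 < \<nu>" and n1: "1 \<le> \<nu> * n" and e1: "\<nu> * n \<le> e" and e2: "e \<le> n + 1"
  shows "1 / Gamma e \<le> exp (real n + 2 + ln (real n + 1) - \<nu> * real n * ln (\<nu> * real n))"
proof -
  have e: "1 \<le> e" using n1 e1 by linarith
  have G: "e powr (e - 1) * exp (- (e + 1)) \<le> Gamma e" by (rule Gamma_lower[OF e])
  have pos: "0 < e powr (e - 1) * exp (- (e + 1))" using e by simp
  have "1 / Gamma e \<le> 1 / (e powr (e - 1) * exp (- (e + 1)))"
    using G pos by (intro divide_left_mono) auto
  also have "\<dots> = exp (e + 1 - (e - 1) * ln e)"
    using e by (simp add: powr_def exp_diff exp_minus field_simps exp_add)
  also have "\<dots> \<le> exp (real n + 2 + ln (real n + 1) - \<nu> * real n * ln (\<nu> * real n))"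
  proof -
    have l1: "ln e \<le> ln (real n + 1)" using e e2 by simp
    have l0: "0 \<le> ln (\<nu> * n)" using n1 by simp
    have "ln (\<nu> * n) \<le> ln e" using n1 e1 by simp
    hence "\<nu> * n * ln (\<nu> * n) \<le> e * ln e"
      using e1 l0 n1 by (intro mult_mono) auto
    thus ?thesis using l1 e2 by (simp add: algebra_simps)
  qed
  finally show ?thesis .
qed

lemma summable_exp_bound:
  fixes A B q \<nu> :: real
  assumes nu: "0 < \<nu>"
  shows "summable (\<lambda>n::nat. exp (A + B * n + q * ln (n + 1) - \<nu> * n * ln (\<nu> * n)))"
proof -
  have lim: "((\<lambda>y::real. exp (A + B * y + q * ln (y + 1) - \<nu> * y * ln (\<nu> * y) + y * ln 2)) \<longlongrightarrow> 0) at_top"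
    using nu by real_asymp
  have "((\<lambda>n::nat. exp (A + B * real n + q * ln (real n + 1) - \<nu> * real n * ln (\<nu> * real n) + real n * ln 2)) \<longlongrightarrow> 0) sequentially"
    by (rule filterlim_compose[OF lim filterlim_real_sequentially])
  hence ev: "eventually (\<lambda>n. exp (A + B * real n + q * ln (real n + 1) - \<nu> * real n * ln (\<nu> * real n) + real n * ln 2) < 1) sequentially"
    by (rule order_tendstoD) simp
  show ?thesis
  proof (rule summable_comparison_test_ev[OF _ summable_geometric[of "1/2"]])
    show "eventually (\<lambda>n. norm (exp (A + B * real n + q * ln (real n + 1) - \<nu> * real n * ln (\<nu> * real n))) \<le> (1/2) ^ n) sequentially"
      using ev
    proof eventually_elim
      case (elim n)
      have "exp (A + B * real n + q * ln (real n + 1) - \<nu> * real n * ln (\<nu> * real n) + real n * ln 2)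
          = exp (A + B * real n + q * ln (real n + 1) - \<nu> * real n * ln (\<nu> * real n)) * 2 ^ n"
        by (simp add: exp_add exp_of_nat_mult)
      with elim have "exp (A + B * real n + q * ln (real n + 1) - \<nu> * real n * ln (\<nu> * real n)) * 2 ^ n < 1"
        by simp
      thus ?case by (simp add: field_simps power_divide)
    qed
  qed simp
qed

lemma sumb:
  fixes I :: "nat \<Rightarrow> 'i set" and c e :: "'i \<Rightarrow> real" and p :: nat
  assumes fin: "\<And>n. finite (I n)" and card: "\<And>n. card (I n) \<le> (n + 1) ^ p"
    and nu: "0 < \<nu>" and L: "1 \<le> L"
    and cb: "\<And>n i. i \<in> I n \<Longrightarrow> \<bar>c i\<bar> \<le> L ^ n"
    and e1: "\<And>n i. i \<in> I n \<Longrightarrow> \<nu> * n \<le> e i"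
    and e2: "\<And>n i. i \<in> I n \<Longrightarrow> e i \<le> n + 1"
    and e0: "\<And>n i. i \<in> I n \<Longrightarrow> 0 < e i"
  shows "summable (\<lambda>n. \<Sum>i\<in>I n. \<bar>c i\<bar> * gk (e i) x)"
proof (cases "0 < x")
  case False thus ?thesis by simp
next
  case x: True
  define M where "M = max 1 x"
  have M1: "1 \<le> M" and xM: "x \<le> M" by (auto simp: M_def)
  define V where "V n = exp (ln x * (-1) + ln M + (ln L + ln M + 1) * real n + (real p + 1) * ln (real n + 1) + 2 - \<nu> * real n * ln (\<nu> * real n))" for n :: nat
  have sV: "summable V"
    using summable_exp_bound[OF nu, of "ln x * (-1) + ln M + 2" "ln L + ln M + 1" "real p + 1"]
    unfolding V_def by (simp add: algebra_simps)
  have Veq: "V n = (real n + 1) ^ p * (L ^ n * (M ^ (n + 1) / x * exp (real n + 2 + ln (real n + 1) - \<nu> * real n * ln (\<nu> * real n))))" for n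
  proof -
    let ?X = "(real n + 1) ^ p * (L ^ n * (M ^ (n + 1) / x * exp (real n + 2 + ln (real n + 1) - \<nu> * real n * ln (\<nu> * real n))))"
    have pos: "0 < ?X" using x L M1 by simp
    have "?X = exp (ln ?X)" using pos by simp
    also have "ln ?X = ln x * (-1) + ln M + (ln L + ln M + 1) * real n + (real p + 1) * ln (real n + 1) + 2 - \<nu> * real n * ln (\<nu> * real n)"
      using x L M1 by (simp add: ln_mult ln_div ln_realpow algebra_simps)
    finally show ?thesis unfolding V_def by (rule sym)
  qed
  show ?thesis
  proof (rule summable_comparison_test_ev[OF _ sV])
    have "eventually (\<lambda>n. 1 \<le> \<nu> * real n) sequentially"
    proof -
      obtain N :: nat where "1 / \<nu> \<le> N" using real_arch_simple by blast
      hence "\<forall>n\<ge>N. 1 \<le> \<nu> * real n" using nu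
        by (auto simp: field_simps) (smt (verit) mult_left_mono of_nat_mono)
      thus ?thesis by (auto simp: eventually_sequentially)
    qed
    thus "eventually (\<lambda>n. norm (\<Sum>i\<in>I n. \<bar>c i\<bar> * gk (e i) x) \<le> V n) sequentially"
    proof eventually_elim
      case (elim n)
      have tb: "\<bar>c i\<bar> * gk (e i) x \<le> L ^ n * (M ^ (n + 1) / x * exp (real n + 2 + ln (real n + 1) - \<nu> * real n * ln (\<nu> * real n)))"
        if i: "i \<in> I n" for i
      proof -
        have ei: "0 < e i" using e0[OF i] .
        have "x powr (e i - 1) = x powr (e i) / x" using x by (simp add: powr_diff)
        also have "x powr (e i) \<le> M powr (e i)" using x xM ei by (intro powr_mono2) auto
        also have "M powr (e i) \<le> M powr (real (n + 1))" using M1 e2[OF i] by (intro powr_mono) auto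
        also have "M powr (real (n + 1)) = M ^ (n + 1)" using M1 by (intro powr_realpow) simp
        finally have px: "x powr (e i - 1) \<le> M ^ (n + 1) / x" using x by (simp add: divide_right_mono)
        have ig: "1 / Gamma (e i) \<le> exp (real n + 2 + ln (real n + 1) - \<nu> * real n * ln (\<nu> * real n))"
          using inv_Gamma_bound[OF nu elim e1[OF i]] e2[OF i] by simp
        have "gk (e i) x = x powr (e i - 1) * (1 / Gamma (e i))" using x by (simp add: gk_def)
        also have "\<dots> \<le> M ^ (n + 1) / x * exp (real n + 2 + ln (real n + 1) - \<nu> * real n * ln (\<nu> * real n))"
          using px ig ei x M1 by (intro mult_mono) (auto intro: Gamma_real_pos less_imp_le)
        finally have "gk (e i) x \<le> \<dots>" .
        thus ?thesis using cb[OF i] ei by (intro mult_mono) (auto intro: gk_nonneg)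
      qed
      have "norm (\<Sum>i\<in>I n. \<bar>c i\<bar> * gk (e i) x) = (\<Sum>i\<in>I n. \<bar>c i\<bar> * gk (e i) x)"
        unfolding real_norm_def using e0 by (intro abs_of_nonneg sum_nonneg mult_nonneg_nonneg gk_nonneg) auto
      also have "\<dots> \<le> real (card (I n)) * (L ^ n * (M ^ (n + 1) / x * exp (real n + 2 + ln (real n + 1) - \<nu> * real n * ln (\<nu> * real n))))"
        using sum_bounded_above[of "I n" _ "L ^ n * (M ^ (n + 1) / x * exp (real n + 2 + ln (real n + 1) - \<nu> * real n * ln (\<nu> * real n)))"] tb
        by auto
      also have "\<dots> \<le> (real n + 1) ^ p * (L ^ n * (M ^ (n + 1) / x * exp (real n + 2 + ln (real n + 1) - \<nu> * real n * ln (\<nu> * real n))))"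
      proof (rule mult_right_mono)
        have "real (card (I n)) \<le> real ((n + 1) ^ p)" using card[of n] by linarith
        thus "real (card (I n)) \<le> (real n + 1) ^ p" by (simp add: add.commute)
      qed (use x L M1 in auto)
      also have "\<dots> = V n" by (simp add: Veq)
      finally show ?case .
    qed
  qed
qed

lemma conv_fin3:
  fixes I :: "nat \<Rightarrow> 'i set" and e :: "'i \<Rightarrow> real" and I' :: "nat \<Rightarrow> 'j set" and e' :: "'j \<Rightarrow> real"
    and d :: "'i \<Rightarrow> 'j \<Rightarrow> real"
  assumes fin: "\<And>k. finite (I k)" "\<And>k. finite (I' k)"
    and pe: "\<And>k i. i \<in> I k \<Longrightarrow> 0 < e i" and pe': "\<And>k i. i \<in> I' k \<Longrightarrow> 0 < e' i"
  shows "integrable lborel (\<lambda>y. \<Sum>m\<le>n. \<Sum>i\<in>I m. \<Sum>i'\<in>I' (n - m). d i i' * (gk (e i) (x - y) * gk (e' i') y))"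
    and "(\<integral>y. (\<Sum>m\<le>n. \<Sum>i\<in>I m. \<Sum>i'\<in>I' (n - m). d i i' * (gk (e i) (x - y) * gk (e' i') y)) \<partial>lborel)
         = (\<Sum>m\<le>n. \<Sum>i\<in>I m. \<Sum>i'\<in>I' (n - m). d i i' * gk (e i + e' i') x)"
proof -
  have int: "integrable lborel (\<lambda>y. d i i' * (gk (e i) (x - y) * gk (e' i') y))"
    if "i \<in> I m" "i' \<in> I' k" for i i' m k
    using gconv_integrable(1)[OF pe[OF that(1)] pe'[OF that(2)]] by simp
  show "integrable lborel (\<lambda>y. \<Sum>m\<le>n. \<Sum>i\<in>I m. \<Sum>i'\<in>I' (n - m). d i i' * (gk (e i) (x - y) * gk (e' i') y))"
    by (intro Bochner_Integration.integrable_sum) (blast intro: int)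
  have "(\<integral>y. (\<Sum>m\<le>n. \<Sum>i\<in>I m. \<Sum>i'\<in>I' (n - m). d i i' * (gk (e i) (x - y) * gk (e' i') y)) \<partial>lborel)
      = (\<Sum>m\<le>n. \<Sum>i\<in>I m. \<Sum>i'\<in>I' (n - m). (\<integral>y. d i i' * (gk (e i) (x - y) * gk (e' i') y) \<partial>lborel))"
  proof -
    have "(\<integral>y. (\<Sum>m\<le>n. \<Sum>i\<in>I m. \<Sum>i'\<in>I' (n - m). d i i' * (gk (e i) (x - y) * gk (e' i') y)) \<partial>lborel)
      = (\<Sum>m\<le>n. (\<integral>y. (\<Sum>i\<in>I m. \<Sum>i'\<in>I' (n - m). d i i' * (gk (e i) (x - y) * gk (e' i') y)) \<partial>lborel))"
      by (rule Bochner_Integration.integral_sum) (intro Bochner_Integration.integrable_sum, blast intro: int)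
    also have "\<dots> = (\<Sum>m\<le>n. \<Sum>i\<in>I m. (\<integral>y. (\<Sum>i'\<in>I' (n - m). d i i' * (gk (e i) (x - y) * gk (e' i') y)) \<partial>lborel))"
      by (intro sum.cong refl Bochner_Integration.integral_sum) (intro Bochner_Integration.integrable_sum, blast intro: int)
    also have "\<dots> = (\<Sum>m\<le>n. \<Sum>i\<in>I m. \<Sum>i'\<in>I' (n - m). (\<integral>y. d i i' * (gk (e i) (x - y) * gk (e' i') y) \<partial>lborel))"
      by (intro sum.cong refl Bochner_Integration.integral_sum) (blast intro: int)
    finally show ?thesis .
  qed
  also have "\<dots> = (\<Sum>m\<le>n. \<Sum>i\<in>I m. \<Sum>i'\<in>I' (n - m). d i i' * gk (e i + e' i') x)"
    by (intro sum.cong refl) (simp add: gconv_integrable(2)[OF pe pe'])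
  finally show "(\<integral>y. (\<Sum>m\<le>n. \<Sum>i\<in>I m. \<Sum>i'\<in>I' (n - m). d i i' * (gk (e i) (x - y) * gk (e' i') y)) \<partial>lborel)
         = (\<Sum>m\<le>n. \<Sum>i\<in>I m. \<Sum>i'\<in>I' (n - m). d i i' * gk (e i + e' i') x)" .
qed

lemma conv_series:
  fixes I :: "nat \<Rightarrow> 'i set" and c e :: "'i \<Rightarrow> real" and I' :: "nat \<Rightarrow> 'j set" and c' e' :: "'j \<Rightarrow> real"
  assumes fin: "\<And>k. finite (I k)" "\<And>k. finite (I' k)"
    and pe: "\<And>k i. i \<in> I k \<Longrightarrow> 0 < e i" and pe': "\<And>k i. i \<in> I' k \<Longrightarrow> 0 < e' i"
    and sP: "\<And>t. summable (\<lambda>k. \<Sum>i\<in>I k. \<bar>c i\<bar> * gk (e i) t)"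
    and sQ: "\<And>t. summable (\<lambda>k. \<Sum>i\<in>I' k. \<bar>c' i\<bar> * gk (e' i) t)"
    and sR: "summable (\<lambda>n. \<Sum>m\<le>n. \<Sum>i\<in>I m. \<Sum>i'\<in>I' (n - m). \<bar>c i * c' i'\<bar> * gk (e i + e' i') x)"
  shows "integrable lborel (\<lambda>y. (\<Sum>k. \<Sum>i\<in>I k. c i * gk (e i) (x - y)) * (\<Sum>k. \<Sum>i\<in>I' k. c' i * gk (e' i) y))"
    and "(\<integral>y. (\<Sum>k. \<Sum>i\<in>I k. c i * gk (e i) (x - y)) * (\<Sum>k. \<Sum>i\<in>I' k. c' i * gk (e' i) y) \<partial>lborel)
         = (\<Sum>n. \<Sum>m\<le>n. \<Sum>i\<in>I m. \<Sum>i'\<in>I' (n - m). c i * c' i' * gk (e i + e' i') x)"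
proof -
  define p where "p k t = (\<Sum>i\<in>I k. c i * gk (e i) t)" for k t
  define q where "q k t = (\<Sum>i\<in>I' k. c' i * gk (e' i) t)" for k t
  define pa where "pa k t = (\<Sum>i\<in>I k. \<bar>c i\<bar> * gk (e i) t)" for k t
  define qa where "qa k t = (\<Sum>i\<in>I' k. \<bar>c' i\<bar> * gk (e' i) t)" for k t
  have pa0: "0 \<le> pa k t" for k t
    unfolding pa_def using pe by (intro sum_nonneg mult_nonneg_nonneg gk_nonneg) auto
  have qa0: "0 \<le> qa k t" for k t
    unfolding qa_def using pe' by (intro sum_nonneg mult_nonneg_nonneg gk_nonneg) auto
  have pn: "norm (p k t) \<le> pa k t" for k t
  proof -
    have "norm (p k t) \<le> (\<Sum>i\<in>I k. norm (c i * gk (e i) t))" unfolding p_def by (rule norm_sum)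
    also have "\<dots> = pa k t" unfolding pa_def using pe
      by (intro sum.cong refl) (auto simp: abs_mult intro!: abs_of_nonneg gk_nonneg)
    finally show ?thesis .
  qed
  have qn: "norm (q k t) \<le> qa k t" for k t
  proof -
    have "norm (q k t) \<le> (\<Sum>i\<in>I' k. norm (c' i * gk (e' i) t))" unfolding q_def by (rule norm_sum)
    also have "\<dots> = qa k t" unfolding qa_def using pe'
      by (intro sum.cong refl) (auto simp: abs_mult intro!: abs_of_nonneg gk_nonneg)
    finally show ?thesis .
  qed
  have spa: "summable (\<lambda>k. pa k t)" for t unfolding pa_def by (rule sP)
  have sqa: "summable (\<lambda>k. qa k t)" for t unfolding qa_def by (rule sQ)
  have spn: "summable (\<lambda>k. norm (p k t))" for t
    by (rule summable_comparison_test[OF _ spa]) (use pn in auto)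
  have sqn: "summable (\<lambda>k. norm (q k t))" for t
    by (rule summable_comparison_test[OF _ sqa]) (use qn in auto)
  define f where "f n y = (\<Sum>m\<le>n. p m (x - y) * q (n - m) y)" for n y
  define F where "F n y = (\<Sum>m\<le>n. pa m (x - y) * qa (n - m) y)" for n y
  have prod_eq: "(\<Sum>k. p k (x - y)) * (\<Sum>k. q k y) = (\<Sum>n. f n y)" for y
    unfolding f_def using Cauchy_product_sums[OF spn sqn] by (simp add: sums_iff)
  have fexp: "f n y = (\<Sum>m\<le>n. \<Sum>i\<in>I m. \<Sum>i'\<in>I' (n - m). (c i * c' i') * (gk (e i) (x - y) * gk (e' i') y))" for n y
    unfolding f_def p_def q_def sum_product by (intro sum.cong refl) (simp add: algebra_simps)
  have Fexp: "F n y = (\<Sum>m\<le>n. \<Sum>i\<in>I m. \<Sum>i'\<in>I' (n - m). \<bar>c i * c' i'\<bar> * (gk (e i) (x - y) * gk (e' i') y))" for n y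
    unfolding F_def pa_def qa_def sum_product by (intro sum.cong refl) (simp add: algebra_simps abs_mult)
  have fint: "integrable lborel (f n)" for n
    unfolding fexp[abs_def] by (rule conv_fin3(1)[OF fin pe pe'])
  have fI: "(\<integral>y. f n y \<partial>lborel) = (\<Sum>m\<le>n. \<Sum>i\<in>I m. \<Sum>i'\<in>I' (n - m). c i * c' i' * gk (e i + e' i') x)" for n
    unfolding fexp by (rule conv_fin3(2)[OF fin pe pe'])
  have Fint: "integrable lborel (F n)" for n
    unfolding Fexp[abs_def] by (rule conv_fin3(1)[OF fin pe pe'])
  have FI: "(\<integral>y. F n y \<partial>lborel) = (\<Sum>m\<le>n. \<Sum>i\<in>I m. \<Sum>i'\<in>I' (n - m). \<bar>c i * c' i'\<bar> * gk (e i + e' i') x)" for n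
    unfolding Fexp by (rule conv_fin3(2)[OF fin pe pe'])
  have fF: "norm (f n y) \<le> F n y" for n y
  proof -
    have "norm (f n y) \<le> (\<Sum>m\<le>n. norm (p m (x - y) * q (n - m) y))" unfolding f_def by (rule norm_sum)
    also have "\<dots> \<le> F n y" unfolding F_def
      by (intro sum_mono) (auto simp: abs_mult intro!: mult_mono pn[simplified] qn[simplified] pa0 qa0)
    finally show ?thesis .
  qed
  have sF: "summable (\<lambda>n. F n y)" for y
  proof -
    have a: "summable (\<lambda>k. norm (pa k (x - y)))" using spa pa0 by simp
    have b: "summable (\<lambda>k. norm (qa k y))" using sqa qa0 by simp
    show ?thesis unfolding F_def by (rule sums_summable[OF Cauchy_product_sums[OF a b]])
  qed
  have A1: "AE y in lborel. summable (\<lambda>n. norm (f n y))"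
    by (intro AE_I2 summable_comparison_test[OF _ sF]) (use fF in auto)
  have A2: "summable (\<lambda>n. \<integral>y. norm (f n y) \<partial>lborel)"
  proof (rule summable_comparison_test[OF _ sR])
    show "\<exists>N. \<forall>n\<ge>N. norm (\<integral>y. norm (f n y) \<partial>lborel) \<le> (\<Sum>m\<le>n. \<Sum>i\<in>I m. \<Sum>i'\<in>I' (n - m). \<bar>c i * c' i'\<bar> * gk (e i + e' i') x)"
    proof (intro exI allI impI)
      fix n :: nat
      have "norm (\<integral>y. norm (f n y) \<partial>lborel) = (\<integral>y. norm (f n y) \<partial>lborel)"
        by (simp add: integral_nonneg_AE)
      also have "\<dots> \<le> (\<integral>y. F n y \<partial>lborel)"
        by (intro integral_mono fF Fint integrable_norm fint)
      also have "\<dots> = (\<Sum>m\<le>n. \<Sum>i\<in>I m. \<Sum>i'\<in>I' (n - m). \<bar>c i * c' i'\<bar> * gk (e i + e' i') x)" by (rule FI)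
      finally show "norm (\<integral>y. norm (f n y) \<partial>lborel) \<le> \<dots>" .
    qed
  qed
  have eqf: "(\<lambda>y. (\<Sum>k. \<Sum>i\<in>I k. c i * gk (e i) (x - y)) * (\<Sum>k. \<Sum>i\<in>I' k. c' i * gk (e' i) y)) = (\<lambda>y. \<Sum>n. f n y)"
    using prod_eq unfolding p_def q_def by auto
  show "integrable lborel (\<lambda>y. (\<Sum>k. \<Sum>i\<in>I k. c i * gk (e i) (x - y)) * (\<Sum>k. \<Sum>i\<in>I' k. c' i * gk (e' i) y))"
    unfolding eqf by (rule integrable_suminf[OF fint A1 A2])
  show "(\<integral>y. (\<Sum>k. \<Sum>i\<in>I k. c i * gk (e i) (x - y)) * (\<Sum>k. \<Sum>i\<in>I' k. c' i * gk (e' i) y) \<partial>lborel)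
         = (\<Sum>n. \<Sum>m\<le>n. \<Sum>i\<in>I m. \<Sum>i'\<in>I' (n - m). c i * c' i' * gk (e i + e' i') x)"
    unfolding eqf integral_suminf[OF fint A1 A2] fI ..
qed

definition kset :: "nat set \<Rightarrow> nat \<Rightarrow> (nat \<Rightarrow> nat) set" where
  "kset J k = {\<kappa>. (\<forall>j. j \<notin> J \<longrightarrow> \<kappa> j = 0) \<and> (\<forall>j\<in>J. 1 \<le> \<kappa> j) \<and> (\<Sum>j\<in>J. \<kappa> j) = k}"

definition kcf :: "(nat \<Rightarrow> real) \<Rightarrow> nat set \<Rightarrow> (nat \<Rightarrow> nat) \<Rightarrow> real" where
  "kcf lam J \<kappa> = (\<Prod>j\<in>J. (-1) ^ (\<kappa> j + 1) * lam j ^ \<kappa> j)"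

definition kex :: "(nat \<Rightarrow> real) \<Rightarrow> nat set \<Rightarrow> (nat \<Rightarrow> nat) \<Rightarrow> real" where
  "kex nu J \<kappa> = (\<Sum>j\<in>J. real (\<kappa> j) * nu j)"

definition rst :: "nat set \<Rightarrow> (nat \<Rightarrow> nat) \<Rightarrow> nat \<Rightarrow> nat" where
  "rst J \<mu> = (\<lambda>i. if i \<in> J then \<mu> i else 0)"

lemma kset_finite_card:
  assumes J: "finite J"
  shows "finite (kset J k)" and "card (kset J k) \<le> (k + 1) ^ card J"
proof -
  have inj: "inj_on (\<lambda>\<kappa>. restrict \<kappa> J) (kset J k)"
  proof (rule inj_onI)
    fix a b assume a: "a \<in> kset J k" and b: "b \<in> kset J k" and eq: "restrict a J = restrict b J"
    show "a = b"
    proof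
      fix i show "a i = b i"
        using a b fun_cong[OF eq, of i] by (cases "i \<in> J") (auto simp: kset_def)
    qed
  qed
  have sub: "(\<lambda>\<kappa>. restrict \<kappa> J) ` kset J k \<subseteq> PiE J (\<lambda>_. {..k})"
  proof
    fix f assume "f \<in> (\<lambda>\<kappa>. restrict \<kappa> J) ` kset J k"
    then obtain \<kappa> where \<kappa>: "\<kappa> \<in> kset J k" and f: "f = restrict \<kappa> J" by auto
    have "\<kappa> j \<le> k" if "j \<in> J" for j
    proof -
      have "\<kappa> j \<le> (\<Sum>j\<in>J. \<kappa> j)" using J that by (intro member_le_sum) auto
      thus ?thesis using \<kappa> by (simp add: kset_def)
    qed
    thus "f \<in> PiE J (\<lambda>_. {..k})" unfolding f by auto
  qed
  have finPi: "finite (PiE J (\<lambda>_. {..k::nat}))" using J by (intro finite_PiE) auto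
  show "finite (kset J k)"
    using finite_imageD[OF finite_subset[OF sub finPi] inj] .
  have "card (kset J k) = card ((\<lambda>\<kappa>. restrict \<kappa> J) ` kset J k)" using card_image[OF inj] by simp
  also have "\<dots> \<le> card (PiE J (\<lambda>_. {..k::nat}))" by (rule card_mono[OF finPi sub])
  also have "\<dots> = (k + 1) ^ card J" using J by (simp add: card_PiE)
  finally show "card (kset J k) \<le> (k + 1) ^ card J" .
qed

lemma kcf_abs_le:
  assumes J: "finite J" and \<kappa>: "\<kappa> \<in> kset J k" and lam: "\<And>j. j \<in> J \<Longrightarrow> 0 < lam j \<and> lam j \<le> L"
  shows "\<bar>kcf lam J \<kappa>\<bar> \<le> L ^ k"
proof -
  have lam0: "\<And>j. j \<in> J \<Longrightarrow> 0 \<le> lam j" and lamL: "\<And>j. j \<in> J \<Longrightarrow> lam j \<le> L"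
    using lam by (auto simp: less_imp_le)
  have "\<bar>kcf lam J \<kappa>\<bar> = (\<Prod>j\<in>J. lam j ^ \<kappa> j)"
    unfolding kcf_def abs_prod
  proof (intro prod.cong refl)
    fix j assume "j \<in> J"
    hence "0 < lam j" using lam by blast
    thus "\<bar>(-1) ^ (\<kappa> j + 1) * lam j ^ \<kappa> j\<bar> = lam j ^ \<kappa> j" by (simp add: abs_mult power_abs)
  qed
  also have "\<dots> \<le> (\<Prod>j\<in>J. L ^ \<kappa> j)"
    by (intro prod_mono conjI power_mono zero_le_power lam0 lamL)
  also have "\<dots> = L ^ (\<Sum>j\<in>J. \<kappa> j)" by (simp add: power_sum)
  also have "\<dots> = L ^ k" using \<kappa> by (simp add: kset_def)
  finally show ?thesis .
qed

lemma kex_bounds: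
  assumes J: "finite J" and \<kappa>: "\<kappa> \<in> kset J k" and nu: "\<And>j. j \<in> J \<Longrightarrow> vmin \<le> nu j \<and> nu j \<le> 1"
  shows "vmin * k \<le> kex nu J \<kappa>" and "kex nu J \<kappa> \<le> k"
proof -
  have k: "(\<Sum>j\<in>J. \<kappa> j) = k" using \<kappa> by (simp add: kset_def)
  have ks: "real k = (\<Sum>j\<in>J. real (\<kappa> j))" by (subst k[symmetric]) (simp only: of_nat_sum)
  have "vmin * k = (\<Sum>j\<in>J. real (\<kappa> j) * vmin)" unfolding ks by (simp add: sum_distrib_left mult.commute)
  also have "\<dots> \<le> kex nu J \<kappa>" unfolding kex_def using nu by (intro sum_mono mult_left_mono) auto
  finally show "vmin * k \<le> kex nu J \<kappa>" .
  have "kex nu J \<kappa> \<le> (\<Sum>j\<in>J. real (\<kappa> j) * 1)" unfolding kex_def using nu by (intro sum_mono mult_left_mono) auto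
  thus "kex nu J \<kappa> \<le> k" using ks by simp
qed

lemma kex_pos:
  assumes J: "finite J" "J \<noteq> {}" and \<kappa>: "\<kappa> \<in> kset J k" and nu: "\<And>j. j \<in> J \<Longrightarrow> 0 < nu j"
  shows "0 < kex nu J \<kappa>"
proof -
  obtain j where j: "j \<in> J" using J by auto
  have "0 < real (\<kappa> j) * nu j" using \<kappa> j nu[OF j] by (auto simp: kset_def)
  also have "\<dots> \<le> kex nu J \<kappa>" unfolding kex_def
  proof (rule member_le_sum[OF j _ J(1)])
    fix i assume "i \<in> J - {j}"
    hence "0 < nu i" using nu by blast
    thus "0 \<le> real (\<kappa> i) * nu i" by simp
  qed
  finally show ?thesis .
qed

lemma kset_abs_summable:
  assumes J: "finite J" "J \<noteq> {}" and lam: "\<And>j. j \<in> J \<Longrightarrow> 0 < lam j"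
    and nu: "\<And>j. j \<in> J \<Longrightarrow> 0 < nu j \<and> nu j \<le> 1"
  shows "summable (\<lambda>k. \<Sum>\<kappa>\<in>kset J k. \<bar>kcf lam J \<kappa>\<bar> * gk (kex nu J \<kappa>) t)"
proof -
  define L where "L = max 1 (Max (lam ` J))"
  define vmin where "vmin = Min (nu ` J)"
  have L1: "1 \<le> L" by (simp add: L_def)
  have lamL: "0 < lam j \<and> lam j \<le> L" if "j \<in> J" for j
  proof -
    have "lam j \<le> Max (lam ` J)" using J(1) that by (intro Max_ge) auto
    thus ?thesis using lam[OF that] unfolding L_def by linarith
  qed
  have nu0: "0 < vmin" unfolding vmin_def using J nu by (subst Min_gr_iff) auto
  have nub: "vmin \<le> nu j \<and> nu j \<le> 1" if "j \<in> J" for j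
  proof -
    have "vmin \<le> nu j" unfolding vmin_def using J(1) that by (intro Min_le) auto
    thus ?thesis using nu[OF that] by simp
  qed
  show ?thesis
  proof (rule sumb[OF _ _ nu0 L1])
    show "finite (kset J n)" for n using kset_finite_card(1)[OF J(1)] .
    show "card (kset J n) \<le> (n + 1) ^ card J" for n using kset_finite_card(2)[OF J(1)] .
    show "\<bar>kcf lam J i\<bar> \<le> L ^ n" if "i \<in> kset J n" for i n using kcf_abs_le[OF J(1) that lamL] .
    show "vmin * real n \<le> kex nu J i" if "i \<in> kset J n" for i n
      using kex_bounds(1)[where nu=nu and vmin=vmin, OF J(1) that nub] .
    show "kex nu J i \<le> real n + 1" if "i \<in> kset J n" for i n
      using kex_bounds(2)[where nu=nu and vmin=vmin, OF J(1) that nub] by simp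
    show "0 < kex nu J i" if "i \<in> kset J n" for i n
      by (rule kex_pos[OF J that]) (use nu in blast)
  qed
qed

definition DD :: "(nat \<Rightarrow> real) \<Rightarrow> (nat \<Rightarrow> real) \<Rightarrow> nat set \<Rightarrow> real \<Rightarrow> real" where
  "DD lam nu J t = (\<Sum>k. \<Sum>\<kappa>\<in>kset J k. kcf lam J \<kappa> * gk (kex nu J \<kappa>) t)"

definition mrg :: "nat set \<Rightarrow> (nat \<Rightarrow> nat) \<Rightarrow> (nat \<Rightarrow> nat) \<Rightarrow> nat \<Rightarrow> nat" where
  "mrg J \<kappa> \<kappa>' = (\<lambda>i. if i \<in> J then \<kappa> i else \<kappa>' i)"

lemma kset_reindex:
  assumes J: "finite J" and J': "finite J'" and disj: "J \<inter> J' = {}"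
  shows "(\<Sum>m\<le>n. \<Sum>\<kappa>\<in>kset J m. \<Sum>\<kappa>'\<in>kset J' (n - m). G \<kappa> \<kappa>') =
         (\<Sum>\<mu>\<in>kset (J \<union> J') n. G (rst J \<mu>) (rst J' \<mu>))"
proof -
  define T where "T = Sigma {..n} (\<lambda>m. kset J m \<times> kset J' (n - m))"
  have fin: "finite (kset J m)" "finite (kset J' m)" for m
    using kset_finite_card(1)[OF J] kset_finite_card(1)[OF J'] by auto
  have s1: "(\<Sum>m\<le>n. \<Sum>\<kappa>\<in>kset J m. \<Sum>\<kappa>'\<in>kset J' (n - m). G \<kappa> \<kappa>') =
            (\<Sum>m\<le>n. \<Sum>p\<in>kset J m \<times> kset J' (n - m). G (fst p) (snd p))"
    by (intro sum.cong refl) (simp add: sum.cartesian_product split_def)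
  have s2: "(\<Sum>m\<le>n. \<Sum>p\<in>kset J m \<times> kset J' (n - m). G (fst p) (snd p)) =
            (\<Sum>z\<in>T. G (fst (snd z)) (snd (snd z)))"
    unfolding T_def by (subst sum.Sigma) (auto simp: fin split_def)
  have s3: "(\<Sum>\<mu>\<in>kset (J \<union> J') n. G (rst J \<mu>) (rst J' \<mu>)) = (\<Sum>z\<in>T. G (fst (snd z)) (snd (snd z)))"
  proof (rule sum.reindex_bij_witness[where i = "\<lambda>z. mrg J (fst (snd z)) (snd (snd z))"
                                        and j = "\<lambda>\<mu>. (\<Sum>j\<in>J. \<mu> j, rst J \<mu>, rst J' \<mu>)"])
    fix \<mu> assume \<mu>: "\<mu> \<in> kset (J \<union> J') n"
    have z: "\<And>i. i \<notin> J \<union> J' \<Longrightarrow> \<mu> i = 0" and ge: "\<And>i. i \<in> J \<union> J' \<Longrightarrow> 1 \<le> \<mu> i"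
      and s: "(\<Sum>j\<in>J \<union> J'. \<mu> j) = n" using \<mu> by (auto simp: kset_def)
    have split: "(\<Sum>j\<in>J \<union> J'. \<mu> j) = (\<Sum>j\<in>J. \<mu> j) + (\<Sum>j\<in>J'. \<mu> j)"
      using J J' disj by (rule sum.union_disjoint)
    have sJ: "(\<Sum>j\<in>J. rst J \<mu> j) = (\<Sum>j\<in>J. \<mu> j)" by (intro sum.cong) (auto simp: rst_def)
    have sJ': "(\<Sum>j\<in>J'. rst J' \<mu> j) = (\<Sum>j\<in>J'. \<mu> j)" by (intro sum.cong) (auto simp: rst_def)
    show "mrg J (fst (snd (\<Sum>j\<in>J. \<mu> j, rst J \<mu>, rst J' \<mu>))) (snd (snd (\<Sum>j\<in>J. \<mu> j, rst J \<mu>, rst J' \<mu>))) = \<mu>"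
      using z by (auto simp: mrg_def rst_def fun_eq_iff)
    show "(\<Sum>j\<in>J. \<mu> j, rst J \<mu>, rst J' \<mu>) \<in> T"
      unfolding T_def using s split sJ sJ' ge by (auto simp: kset_def rst_def)
    show "G (fst (snd (\<Sum>j\<in>J. \<mu> j, rst J \<mu>, rst J' \<mu>))) (snd (snd (\<Sum>j\<in>J. \<mu> j, rst J \<mu>, rst J' \<mu>)))
          = G (rst J \<mu>) (rst J' \<mu>)" by simp
  next
    fix z assume z: "z \<in> T"
    then obtain m \<kappa> \<kappa>' where zeq: "z = (m, \<kappa>, \<kappa>')" and m: "m \<le> n" and \<kappa>: "\<kappa> \<in> kset J m"
      and \<kappa>': "\<kappa>' \<in> kset J' (n - m)" unfolding T_def by auto
    have k0: "\<And>i. i \<notin> J \<Longrightarrow> \<kappa> i = 0" and k1: "\<And>i. i \<in> J \<Longrightarrow> 1 \<le> \<kappa> i" and ks: "(\<Sum>j\<in>J. \<kappa> j) = m"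
      using \<kappa> by (auto simp: kset_def)
    have k0': "\<And>i. i \<notin> J' \<Longrightarrow> \<kappa>' i = 0" and k1': "\<And>i. i \<in> J' \<Longrightarrow> 1 \<le> \<kappa>' i" and ks': "(\<Sum>j\<in>J'. \<kappa>' j) = n - m"
      using \<kappa>' by (auto simp: kset_def)
    have mJ: "(\<Sum>j\<in>J. mrg J \<kappa> \<kappa>' j) = m" using ks by (simp add: mrg_def)
    have mJ': "(\<Sum>j\<in>J'. mrg J \<kappa> \<kappa>' j) = n - m"
    proof -
      have "(\<Sum>j\<in>J'. mrg J \<kappa> \<kappa>' j) = (\<Sum>j\<in>J'. \<kappa>' j)" using disj by (intro sum.cong) (auto simp: mrg_def)
      thus ?thesis using ks' by simp
    qed
    have "rst J (mrg J \<kappa> \<kappa>') = \<kappa>" using k0 by (auto simp: rst_def mrg_def fun_eq_iff)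
    moreover have "rst J' (mrg J \<kappa> \<kappa>') = \<kappa>'" using k0' disj by (auto simp: rst_def mrg_def fun_eq_iff)
    ultimately show "(\<Sum>j\<in>J. mrg J (fst (snd z)) (snd (snd z)) j, rst J (mrg J (fst (snd z)) (snd (snd z))),
                      rst J' (mrg J (fst (snd z)) (snd (snd z)))) = z"
      using mJ by (simp add: zeq)
    have "(\<Sum>j\<in>J \<union> J'. mrg J \<kappa> \<kappa>' j) = (\<Sum>j\<in>J. mrg J \<kappa> \<kappa>' j) + (\<Sum>j\<in>J'. mrg J \<kappa> \<kappa>' j)"
      using J J' disj by (rule sum.union_disjoint)
    hence "(\<Sum>j\<in>J \<union> J'. mrg J \<kappa> \<kappa>' j) = n" using mJ mJ' m by simp
    thus "mrg J (fst (snd z)) (snd (snd z)) \<in> kset (J \<union> J') n"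
      using k0 k1 k0' k1' by (auto simp: kset_def mrg_def zeq)
  qed
  show ?thesis using s1 s2 s3 by simp
qed

lemma kcf_rst: "kcf lam J (rst J \<mu>) = kcf lam J \<mu>"
  unfolding kcf_def by (intro prod.cong) (auto simp: rst_def)

lemma kex_rst: "kex nu J (rst J \<mu>) = kex nu J \<mu>"
  unfolding kex_def by (intro sum.cong) (auto simp: rst_def)

lemma kcf_union: "finite J \<Longrightarrow> finite J' \<Longrightarrow> J \<inter> J' = {} \<Longrightarrow> kcf lam (J \<union> J') \<mu> = kcf lam J \<mu> * kcf lam J' \<mu>"
  unfolding kcf_def by (rule prod.union_disjoint)

lemma kex_union: "finite J \<Longrightarrow> finite J' \<Longrightarrow> J \<inter> J' = {} \<Longrightarrow> kex nu (J \<union> J') \<mu> = kex nu J \<mu> + kex nu J' \<mu>"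
  unfolding kex_def by (rule sum.union_disjoint)

lemma DD_conv:
  assumes J: "finite J" "J \<noteq> {}" and J': "finite J'" "J' \<noteq> {}" and disj: "J \<inter> J' = {}"
    and lam: "\<And>j. j \<in> J \<union> J' \<Longrightarrow> 0 < lam j"
    and nu: "\<And>j. j \<in> J \<union> J' \<Longrightarrow> 0 < nu j \<and> nu j \<le> 1"
  shows "integrable lborel (\<lambda>y. DD lam nu J (x - y) * DD lam nu J' y)"
    and "(\<integral>y. DD lam nu J (x - y) * DD lam nu J' y \<partial>lborel) = DD lam nu (J \<union> J') x"
proof -
  have JJ: "finite (J \<union> J')" "J \<union> J' \<noteq> {}" using J J' by auto
  have fin: "\<And>k. finite (kset J k)" "\<And>k. finite (kset J' k)"
    using kset_finite_card(1) J J' by auto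
  have pe: "\<And>k i. i \<in> kset J k \<Longrightarrow> 0 < kex nu J i"
    using kex_pos[OF J] nu by blast
  have pe': "\<And>k i. i \<in> kset J' k \<Longrightarrow> 0 < kex nu J' i"
    using kex_pos[OF J'] nu by blast
  have sP: "\<And>t. summable (\<lambda>k. \<Sum>i\<in>kset J k. \<bar>kcf lam J i\<bar> * gk (kex nu J i) t)"
    by (rule kset_abs_summable[OF J]) (use lam nu in auto)
  have sQ: "\<And>t. summable (\<lambda>k. \<Sum>i\<in>kset J' k. \<bar>kcf lam J' i\<bar> * gk (kex nu J' i) t)"
    by (rule kset_abs_summable[OF J']) (use lam nu in auto)
  have re: "(\<Sum>m\<le>n. \<Sum>i\<in>kset J m. \<Sum>i'\<in>kset J' (n - m). H (kcf lam J i * kcf lam J' i') (kex nu J i + kex nu J' i'))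
          = (\<Sum>\<mu>\<in>kset (J \<union> J') n. H (kcf lam (J \<union> J') \<mu>) (kex nu (J \<union> J') \<mu>))" for n H
    by (subst kset_reindex[OF J(1) J'(1) disj]) (simp add: kcf_rst kex_rst kcf_union kex_union J J' disj)
  have sR: "summable (\<lambda>n. \<Sum>m\<le>n. \<Sum>i\<in>kset J m. \<Sum>i'\<in>kset J' (n - m).
             \<bar>kcf lam J i * kcf lam J' i'\<bar> * gk (kex nu J i + kex nu J' i') x)"
    using re[of "\<lambda>a b. \<bar>a\<bar> * gk b x"] kset_abs_summable[OF JJ, of lam nu x] lam nu by simp
  have DDJ: "DD lam nu J = (\<lambda>t. \<Sum>k. \<Sum>i\<in>kset J k. kcf lam J i * gk (kex nu J i) t)"
    by (simp add: DD_def fun_eq_iff)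
  have DDJ': "DD lam nu J' = (\<lambda>t. \<Sum>k. \<Sum>i\<in>kset J' k. kcf lam J' i * gk (kex nu J' i) t)"
    by (simp add: DD_def fun_eq_iff)
  note C = conv_series[OF fin pe pe' sP sQ sR]
  show "integrable lborel (\<lambda>y. DD lam nu J (x - y) * DD lam nu J' y)"
    unfolding DDJ DDJ' by (rule C(1))
  show "(\<integral>y. DD lam nu J (x - y) * DD lam nu J' y \<partial>lborel) = DD lam nu (J \<union> J') x"
  proof -
    have "(\<integral>y. DD lam nu J (x - y) * DD lam nu J' y \<partial>lborel) =
      (\<Sum>n. \<Sum>m\<le>n. \<Sum>i\<in>kset J m. \<Sum>i'\<in>kset J' (n - m). kcf lam J i * kcf lam J' i' * gk (kex nu J i + kex nu J' i') x)"
      unfolding DDJ DDJ' by (rule C(2))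
    also have "\<dots> = DD lam nu (J \<union> J') x"
      unfolding DD_def using re[of "\<lambda>a b. a * gk b x"] by simp
    finally show ?thesis .
  qed
qed

lemma kset_single: "kset {j} k = (if k = 0 then {} else {(\<lambda>i. if i = j then k else 0)})"
  by (auto simp: kset_def fun_eq_iff)

definition sterm :: "real \<Rightarrow> real \<Rightarrow> real \<Rightarrow> nat \<Rightarrow> real \<Rightarrow> real" where
  "sterm l v s k t = (if k = 0 then 0 else (-1) ^ (k + 1) * l ^ k * gk (real k * v + s) t)"

lemma kset_single_sum:
  "(\<Sum>\<kappa>\<in>kset {j} k. F (kcf lam {j} \<kappa>) (kex nu {j} \<kappa>)) =
   (if k = 0 then 0 else F ((-1) ^ (k + 1) * lam j ^ k) (real k * nu j))"
  by (simp add: kset_single kcf_def kex_def)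

lemma DD_single: "DD lam nu {j} t = (\<Sum>k. sterm (lam j) (nu j) 0 k t)"
  unfolding DD_def sterm_def
  by (intro suminf_cong) (subst kset_single_sum[where F = "\<lambda>a b. a * gk b t"], simp)

lemma sterm_abs_summable:
  assumes l: "0 < l" and v: "0 < v" "v \<le> 1" and s: "0 \<le> s" "s \<le> 1"
  shows "summable (\<lambda>k. \<bar>sterm l v s k t\<bar>)"
proof -
  define I where "I n = (if n = 0 then {} else {n})" for n :: nat
  have "summable (\<lambda>n. \<Sum>i\<in>I n. \<bar>(-1) ^ (i + 1) * l ^ i\<bar> * gk (real i * v + s) t)"
  proof (rule sumb[where p = 1 and L = "max 1 l", OF _ _ v(1)])
    show "finite (I n)" for n by (simp add: I_def)
    show "card (I n) \<le> (n + 1) ^ 1" for n by (simp add: I_def)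
    show "1 \<le> max 1 l" by simp
    show "\<bar>(-1) ^ (i + 1) * l ^ i\<bar> \<le> max 1 l ^ n" if "i \<in> I n" for i n
    proof -
      have i: "i = n" using that by (auto simp: I_def split: if_splits)
      have "l ^ n \<le> max 1 l ^ n" using l by (intro power_mono) auto
      thus ?thesis using i l by (simp add: abs_mult power_abs)
    qed
    show "v * real n \<le> real i * v + s" if "i \<in> I n" for i n
      using that s by (auto simp: I_def split: if_splits)
    show "real i * v + s \<le> real n + 1" if "i \<in> I n" for i n
    proof -
      have "real n * v \<le> real n * 1" using v by (intro mult_left_mono) auto
      moreover have "i = n" using that by (auto simp: I_def split: if_splits)
      ultimately show ?thesis using s by simp
    qed
    show "0 < real i * v + s" if "i \<in> I n" for i n
      using that s v by (auto simp: I_def split: if_splits intro!: add_pos_nonneg)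
  qed
  moreover have "(\<Sum>i\<in>I n. \<bar>(-1) ^ (i + 1) * l ^ i\<bar> * gk (real i * v + s) t) = \<bar>sterm l v s n t\<bar>" for n
  proof (cases "n = 0")
    case False
    hence "0 \<le> gk (real n * v + s) t" using v s by (intro gk_nonneg add_pos_nonneg) auto
    thus ?thesis using False by (simp add: I_def sterm_def abs_mult)
  qed (simp add: I_def sterm_def)
  ultimately show ?thesis by simp
qed

lemma sterm_summable:
  assumes l: "0 < l" and v: "0 < v" "v \<le> 1" and s: "0 \<le> s" "s \<le> 1"
  shows "summable (\<lambda>k. sterm l v s k t)"
  using summable_rabs_cancel[OF sterm_abs_summable[OF assms]] .

lemma DD_measurable[measurable]: "DD lam nu J \<in> borel_measurable borel"
  unfolding DD_def by measurable

lemma gk1: "gk 1 y = (if 0 < y then 1 else 0)"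
  by (simp add: gk_def)

lemma sum_unit_delta:
  fixes H :: "(nat \<Rightarrow> nat) \<Rightarrow> real"
  shows "(\<Sum>m\<le>n. \<Sum>i\<in>kset J m. \<Sum>i'\<in>(if n - m = 0 then {()} else {}). H i) = (\<Sum>i\<in>kset J n. H i)"
proof -
  have "(\<Sum>m\<le>n. \<Sum>i\<in>kset J m. \<Sum>i'\<in>(if n - m = 0 then {()} else {}). H i)
      = (\<Sum>m\<le>n. if m = n then (\<Sum>i\<in>kset J m. H i) else 0)"
    by (intro sum.cong refl) auto
  also have "\<dots> = (\<Sum>i\<in>kset J n. H i)" by (simp add: sum.delta)
  finally show ?thesis .
qed

lemma DD_single_cdf:
  assumes l: "0 < lam j" and v: "0 < nu j" "nu j \<le> 1"
  shows "integrable lborel (\<lambda>s. DD lam nu {j} s * indicator {..x} s)"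
    and "(\<integral>s. DD lam nu {j} s * indicator {..x} s \<partial>lborel) = (\<Sum>k. sterm (lam j) (nu j) 1 k x)"
proof -
  define I' :: "nat \<Rightarrow> unit set" where "I' k = (if k = 0 then {()} else {})" for k
  have fin: "\<And>k. finite (kset {j} k)" "\<And>k. finite (I' k)"
    using kset_finite_card(1)[of "{j}"] by (auto simp: I'_def)
  have pe: "\<And>k i. i \<in> kset {j} k \<Longrightarrow> 0 < kex nu {j} i"
    using kex_pos[of "{j}"] v by blast
  have pe': "\<And>k i. i \<in> I' k \<Longrightarrow> 0 < (\<lambda>_. 1::real) i" by simp
  have sP: "\<And>t. summable (\<lambda>k. \<Sum>i\<in>kset {j} k. \<bar>kcf lam {j} i\<bar> * gk (kex nu {j} i) t)"
    by (rule kset_abs_summable) (use l v in auto)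
  have sQ: "\<And>t. summable (\<lambda>k. \<Sum>i\<in>I' k. \<bar>(\<lambda>_. 1::real) i\<bar> * gk ((\<lambda>_. 1) i) t)"
    by (rule summable_finite[of "{0}"]) (auto simp: I'_def)
  have termeq: "(\<Sum>i\<in>kset {j} n. F (kcf lam {j} i) (kex nu {j} i)) =
        (if n = 0 then 0 else F ((-1) ^ (n + 1) * lam j ^ n) (real n * nu j))" for n F
    by (rule kset_single_sum)
  have sR: "summable (\<lambda>n. \<Sum>m\<le>n. \<Sum>i\<in>kset {j} m. \<Sum>i'\<in>I' (n - m).
             \<bar>kcf lam {j} i * (\<lambda>_. 1) i'\<bar> * gk (kex nu {j} i + (\<lambda>_. 1) i') x)"
  proof -
    have eq: "(\<Sum>m\<le>n. \<Sum>i\<in>kset {j} m. \<Sum>i'\<in>I' (n - m).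
             \<bar>kcf lam {j} i * (\<lambda>_. 1) i'\<bar> * gk (kex nu {j} i + (\<lambda>_. 1) i') x) = \<bar>sterm (lam j) (nu j) 1 n x\<bar>" for n
    proof -
      have "(\<Sum>m\<le>n. \<Sum>i\<in>kset {j} m. \<Sum>i'\<in>I' (n - m).
             \<bar>kcf lam {j} i * (\<lambda>_. 1) i'\<bar> * gk (kex nu {j} i + (\<lambda>_. 1) i') x)
           = (\<Sum>i\<in>kset {j} n. \<bar>kcf lam {j} i\<bar> * gk (kex nu {j} i + 1) x)"
        unfolding I'_def by (subst sum_unit_delta) simp
      also have "\<dots> = \<bar>sterm (lam j) (nu j) 1 n x\<bar>"
      proof (cases "n = 0")
        case False
        have "0 \<le> gk (real n * nu j + 1) x" using v by (intro gk_nonneg add_nonneg_pos) auto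
        thus ?thesis using False
          by (subst kset_single_sum[where F = "\<lambda>a b. \<bar>a\<bar> * gk (b + 1) x"]) (simp add: sterm_def abs_mult)
      qed (simp add: sterm_def kset_single)
      finally show ?thesis .
    qed
    show ?thesis unfolding eq by (rule sterm_abs_summable) (use l v in auto)
  qed
  note C = conv_series[OF fin pe pe' sP sQ sR]
  have Q: "(\<Sum>k. \<Sum>i\<in>I' k. (\<lambda>_. 1::real) i * gk ((\<lambda>_. 1) i) y) = gk 1 y" for y
  proof -
    have "(\<lambda>k. \<Sum>i\<in>I' k. (\<lambda>_. 1::real) i * gk ((\<lambda>_. 1) i) y) = (\<lambda>k. if k = 0 then gk 1 y else 0)"
      by (auto simp: I'_def fun_eq_iff)
    thus ?thesis using sums_single[of 0 "\<lambda>_. gk 1 y"] by (simp add: sums_iff)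
  qed
  have P: "(\<Sum>k. \<Sum>i\<in>kset {j} k. kcf lam {j} i * gk (kex nu {j} i) t) = DD lam nu {j} t" for t
    by (simp add: DD_def)
  have R: "(\<Sum>n. \<Sum>m\<le>n. \<Sum>i\<in>kset {j} m. \<Sum>i'\<in>I' (n - m). kcf lam {j} i * (\<lambda>_. 1) i' * gk (kex nu {j} i + (\<lambda>_. 1) i') x)
          = (\<Sum>k. sterm (lam j) (nu j) 1 k x)"
  proof (intro suminf_cong)
    fix n
    have "(\<Sum>m\<le>n. \<Sum>i\<in>kset {j} m. \<Sum>i'\<in>I' (n - m). kcf lam {j} i * (\<lambda>_. 1) i' * gk (kex nu {j} i + (\<lambda>_. 1) i') x)
        = (\<Sum>i\<in>kset {j} n. kcf lam {j} i * gk (kex nu {j} i + 1) x)"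
      unfolding I'_def by (subst sum_unit_delta) simp
    also have "\<dots> = sterm (lam j) (nu j) 1 n x"
      by (subst kset_single_sum[where F = "\<lambda>a b. a * gk (b + 1) x"]) (simp add: sterm_def)
    finally show "(\<Sum>m\<le>n. \<Sum>i\<in>kset {j} m. \<Sum>i'\<in>I' (n - m). kcf lam {j} i * (\<lambda>_. 1) i' * gk (kex nu {j} i + (\<lambda>_. 1) i') x)
        = sterm (lam j) (nu j) 1 n x" .
  qed
  have int1: "integrable lborel (\<lambda>y. DD lam nu {j} (x - y) * gk 1 y)"
    using C(1) unfolding P Q .
  have I1: "(\<integral>y. DD lam nu {j} (x - y) * gk 1 y \<partial>lborel) = (\<Sum>k. sterm (lam j) (nu j) 1 k x)"
    using C(2) unfolding P Q R .
  define f where "f s = DD lam nu {j} s * gk 1 (x - s)" for s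
  have fsub: "(\<lambda>y. f (x + (-1) * y)) = (\<lambda>y. DD lam nu {j} (x - y) * gk 1 y)"
    by (simp add: f_def fun_eq_iff)
  have intf: "integrable lborel f"
    using lborel_integrable_real_affine_iff[of "-1" f x] int1 unfolding fsub by simp
  have If: "(\<integral>s. f s \<partial>lborel) = (\<Sum>k. sterm (lam j) (nu j) 1 k x)"
    using lborel_integral_real_affine[of "-1" f x] I1 unfolding fsub by simp
  have ae: "AE s in lborel. f s = DD lam nu {j} s * indicator {..x} s"
    using AE_lborel_singleton[of x] by eventually_elim (auto simp: f_def gk1 indicator_def)
  have m1: "f \<in> borel_measurable lborel" unfolding f_def by measurable
  have m2: "(\<lambda>s. DD lam nu {j} s * indicator {..x} s) \<in> borel_measurable lborel" by measurable
  show "integrable lborel (\<lambda>s. DD lam nu {j} s * indicator {..x} s)"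
    using integrable_cong_AE[OF m1 m2 ae] intf by simp
  show "(\<integral>s. DD lam nu {j} s * indicator {..x} s \<partial>lborel) = (\<Sum>k. sterm (lam j) (nu j) 1 k x)"
    using integral_cong_AE[OF m1 m2 ae] If by simp
qed

lemma ml_cdf:
  assumes l: "0 < l" and v: "0 < v" "v \<le> 1" and t: "0 \<le> t"
  shows "1 - mittag_leffler v (- l * t powr v) = (\<Sum>k. sterm l v 1 k t)"
proof (cases "t = 0")
  case True
  have "(\<lambda>k. (- l * t powr v) ^ k / Gamma (real k * v + 1)) = (\<lambda>k. if k = 0 then 1 else 0)"
    using True v by (auto simp: fun_eq_iff)
  hence "mittag_leffler v (- l * t powr v) = 1"
    unfolding mittag_leffler_def using sums_single[of 0 "\<lambda>_. 1::real"] by (simp add: sums_iff)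
  moreover have "(\<Sum>k. sterm l v 1 k t) = 0"
  proof -
    have "sterm l v 1 k t = 0" for k unfolding sterm_def gk_def using True by simp
    thus ?thesis by simp
  qed
  ultimately show ?thesis by simp
next
  case False
  hence t: "0 < t" using t by simp
  define a where "a k = (- l * t powr v) ^ k / Gamma (real k * v + 1)" for k
  have a0: "a 0 = 1" by (simp add: a_def)
  have aS: "a (Suc k) = - sterm l v 1 (Suc k) t" for k
  proof -
    have "(t powr v) ^ Suc k = (t powr v) powr real (Suc k)"
      using t by (subst powr_realpow) auto
    also have "\<dots> = t powr (real (Suc k) * v)" by (simp add: powr_powr mult.commute)
    finally have "(t powr v) ^ Suc k = t powr (real (Suc k) * v)" .
    moreover have "(- l * t powr v) ^ Suc k = (-1) ^ Suc k * l ^ Suc k * (t powr v) ^ Suc k"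
      by (simp only: power_mult_distrib[symmetric]) simp
    ultimately have "a (Suc k) = (-1) ^ Suc k * l ^ Suc k * t powr (real (Suc k) * v) / Gamma (real (Suc k) * v + 1)"
      by (simp add: a_def)
    thus ?thesis using t by (simp add: sterm_def gk_def)
  qed
  have ss: "summable (\<lambda>k. sterm l v 1 k t)" by (rule sterm_summable) (use l v in auto)
  have ssS: "summable (\<lambda>k. sterm l v 1 (Suc k) t)"
    using ss summable_Suc_iff[of "\<lambda>k. sterm l v 1 k t"] by simp
  have sa: "summable a"
  proof -
    have "summable (\<lambda>k. - sterm l v 1 (Suc k) t)"
      using ssS by (subst summable_minus_iff)
    hence "summable (\<lambda>k. a (Suc k))" by (simp add: aS)
    thus ?thesis using summable_Suc_iff[of a] by simp
  qed
  have "mittag_leffler v (- l * t powr v) = suminf a" unfolding mittag_leffler_def a_def ..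
  also have "\<dots> = (\<Sum>k. a (Suc k)) + a 0" using suminf_split_head[OF sa] by simp
  also have "(\<Sum>k. a (Suc k)) = - (\<Sum>k. sterm l v 1 (Suc k) t)"
    unfolding aS by (rule suminf_minus) (rule ssS)
  also have "(\<Sum>k. sterm l v 1 (Suc k) t) = (\<Sum>k. sterm l v 1 k t)"
    using suminf_split_head[OF ss] by (simp add: sterm_def)
  finally show ?thesis using a0 by simp
qed

lemma gk_continuous_on:
  assumes "0 < a"
  shows "continuous_on {a..b} (gk e)"
proof -
  have "continuous_on {a..b} (\<lambda>t. t powr (e - 1))"
    by (rule continuous_on_powr'[OF continuous_on_id continuous_on_const]) (use assms in auto)
  hence "continuous_on {a..b} (\<lambda>t. t powr (e - 1) * inverse (Gamma e))"
    by (rule continuous_on_mult_right)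
  moreover have "\<And>t. t \<in> {a..b} \<Longrightarrow> t powr (e - 1) * inverse (Gamma e) = gk e t"
    using assms by (auto simp: gk_def divide_inverse)
  ultimately show ?thesis by (rule continuous_on_eq)
qed

lemma sterm_bound:
  assumes l: "0 < l" and v: "0 < v" and a: "0 < a" and t: "a \<le> t" "t \<le> b"
  shows "norm (sterm l v 0 k t) \<le> (b / a) * \<bar>sterm l v 0 k b\<bar>"
proof (cases "k = 0")
  case True thus ?thesis by (simp add: sterm_def)
next
  case False
  have t0: "0 < t" and b0: "0 < b" using a t by auto
  have e0: "0 \<le> real k * v" using v by simp
  have "t powr (real k * v - 1) = t powr (real k * v) / t" using t0 by (simp add: powr_diff)
  also have "\<dots> \<le> b powr (real k * v) / a"
    using t0 a t e0 by (intro frac_le powr_mono2) auto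
  also have "\<dots> = (b / a) * (b powr (real k * v - 1))" using b0 a by (simp add: powr_diff)
  finally have p: "t powr (real k * v - 1) \<le> (b / a) * (b powr (real k * v - 1))" .
  have G: "0 < Gamma (real k * v)" using False v by (intro Gamma_real_pos) simp
  have "t powr (real k * v - 1) / Gamma (real k * v) \<le> ((b / a) * (b powr (real k * v - 1))) / Gamma (real k * v)"
    by (rule divide_right_mono[OF p]) (use G in simp)
  hence "gk (real k * v) t \<le> (b / a) * gk (real k * v) b"
    using t0 b0 by (simp add: gk_def)
  hence "l ^ k * gk (real k * v) t \<le> l ^ k * ((b / a) * gk (real k * v) b)"
    using l by (intro mult_left_mono) auto
  moreover have "0 \<le> gk (real k * v) t" "0 \<le> gk (real k * v) b" using False v by (auto intro!: gk_nonneg)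
  ultimately show ?thesis using False l by (simp add: sterm_def abs_mult power_abs mult_ac)
qed

lemma DD_single_continuous_on:
  assumes l: "0 < lam j" and v: "0 < nu j" "nu j \<le> 1" and a: "0 < a" and ab: "a \<le> b"
  shows "continuous_on {a..b} (DD lam nu {j})"
proof -
  let ?l = "lam j" and ?v = "nu j"
  have sm: "summable (\<lambda>k. (b / a) * \<bar>sterm ?l ?v 0 k b\<bar>)"
    by (intro summable_mult sterm_abs_summable) (use l v in auto)
  have ul: "uniform_limit {a..b} (\<lambda>n t. \<Sum>i<n. sterm ?l ?v 0 i t) (\<lambda>t. \<Sum>i. sterm ?l ?v 0 i t) sequentially"
    by (rule Weierstrass_m_test[OF _ sm]) (use sterm_bound[OF l v(1) a] in auto)
  have cs: "continuous_on {a..b} (\<lambda>t. sterm ?l ?v 0 i t)" for i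
  proof (cases "i = 0")
    case True thus ?thesis by (simp add: sterm_def)
  next
    case False
    thus ?thesis unfolding sterm_def using gk_continuous_on[OF a]
      by (auto intro!: continuous_intros)
  qed
  have c: "continuous_on {a..b} (\<lambda>t. \<Sum>i. sterm ?l ?v 0 i t)"
    by (rule uniform_limit_theorem[OF _ ul]) (auto intro!: always_eventually continuous_on_sum cs)
  have eq: "(\<lambda>t. \<Sum>i. sterm ?l ?v 0 i t) = DD lam nu {j}"
    by (simp add: DD_single fun_eq_iff)
  show ?thesis using c unfolding eq .
qed

lemma DD_single_isCont:
  assumes l: "0 < lam j" and v: "0 < nu j" "nu j \<le> 1" and t: "0 < t"
  shows "isCont (DD lam nu {j}) t"
proof -
  have "continuous_on {t/2..2*t} (DD lam nu {j})"
    by (rule DD_single_continuous_on[where lam=lam and nu=nu and j=j, OF l v]) (use t in auto)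
  moreover have "t \<in> interior {t/2..2*t}" using t by simp
  ultimately show ?thesis by (rule continuous_on_interior)
qed

lemma sets_borel_atMost: "sets (borel :: real measure) = sigma_sets UNIV (range atMost)"
proof -
  have "sets (borel :: real measure) = sets (sigma UNIV (range (\<lambda>a::real. {..a})))"
    by (subst borel_eq_atMost) (rule refl)
  also have "\<dots> = sigma_sets UNIV (range atMost)" by (subst sets_measure_of) auto
  finally show ?thesis .
qed

lemma DD_single_nonpos:
  assumes "t \<le> 0" shows "DD lam nu {j} t = 0"
proof -
  have "sterm (lam j) (nu j) 0 k t = 0" for k using assms by (simp add: sterm_def gk_def)
  thus ?thesis by (simp add: DD_single)
qed

lemma (in prob_space) single_distributed:
  fixes Y :: "'a \<Rightarrow> real"
  assumes l: "0 < lam j" and v: "0 < nu j" "nu j \<le> 1" and Ym[measurable]: "Y \<in> borel_measurable M"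
    and cdf: "\<And>t. 0 \<le> t \<Longrightarrow> measure M {x \<in> space M. Y x \<le> t} = 1 - mittag_leffler (nu j) (- lam j * t powr nu j)"
  shows "(\<forall>t. 0 \<le> DD lam nu {j} t) \<and> distributed M lborel Y (\<lambda>t. ennreal (DD lam nu {j} t))"
proof -
  define F where "F t = (\<Sum>k. sterm (lam j) (nu j) 1 k t)" for t
  define D where "D = DD lam nu {j}"
  have F0: "F t = 0" if "t \<le> 0" for t
  proof -
    have "sterm (lam j) (nu j) 1 k t = 0" for k using that by (simp add: sterm_def gk_def)
    thus ?thesis by (simp add: F_def)
  qed
  have evt: "{x \<in> space M. Y x \<le> t} \<in> events" for t by measurable
  have Fcdf: "measure M {x \<in> space M. Y x \<le> t} = F t" for t
  proof (cases "0 \<le> t")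
    case True thus ?thesis using cdf[OF True] ml_cdf[OF l v True] by (simp add: F_def)
  next
    case False
    have "measure M {x \<in> space M. Y x \<le> t} \<le> measure M {x \<in> space M. Y x \<le> 0}"
      using False by (intro finite_measure_mono evt) auto
    also have "\<dots> = 0" using cdf[of 0] ml_cdf[OF l v, of 0] F0[of 0] by (simp add: F_def)
    finally show ?thesis using F0[of t] False measure_nonneg[of M "{x \<in> space M. Y x \<le> t}"] by simp
  qed
  have Fmono: "F a \<le> F b" if "a \<le> b" for a b
    unfolding Fcdf[symmetric] using that by (intro finite_measure_mono evt) auto
  have Iint: "integrable lborel (\<lambda>s. D s * indicator {..x} s)" for x
    unfolding D_def by (rule DD_single_cdf(1)[where lam=lam and nu=nu and j=j, OF l v])
  have II: "(\<integral>s. D s * indicator {..x} s \<partial>lborel) = F x" for x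
    unfolding D_def F_def by (rule DD_single_cdf(2)[where lam=lam and nu=nu and j=j, OF l v])
  have IocE: "(\<lambda>s. D s * indicator {a<..b} s) = (\<lambda>s. D s * indicator {..b} s - D s * indicator {..a} s)"
    if "a \<le> b" for a b :: real
    using that by (auto simp: fun_eq_iff indicator_def)
  have Iocint: "integrable lborel (\<lambda>s. D s * indicator {a<..b} s)" if "a \<le> b" for a b :: real
    unfolding IocE[OF that] by (intro Bochner_Integration.integrable_diff Iint)
  have Ioc: "(\<integral>s. D s * indicator {a<..b} s \<partial>lborel) = F b - F a" if "a \<le> b" for a b :: real
    unfolding IocE[OF that] by (subst Bochner_Integration.integral_diff) (auto intro: Iint simp: II)
  have nonneg: "0 \<le> D t" for t
  proof (cases "0 < t")
    case False thus ?thesis by (simp add: D_def DD_single_nonpos)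
  next
    case t: True
    show ?thesis
    proof (rule ccontr)
      assume "\<not> 0 \<le> D t"
      hence d: "D t < 0" by simp
      have "isCont D t" unfolding D_def by (rule DD_single_isCont[where lam=lam and nu=nu and j=j, OF l v t])
      then obtain \<delta> where \<delta>: "0 < \<delta>" and cl: "\<And>x'. dist x' t < \<delta> \<Longrightarrow> dist (D x') (D t) < - D t / 2"
        unfolding continuous_at_eps_delta using d by (metis neg_0_less_iff_less half_gt_zero)
      define h where "h = \<delta> / 2"
      have h: "0 < h" "h < \<delta>" using \<delta> by (auto simp: h_def)
      have le: "D s * indicator {t<..t+h} s \<le> (D t / 2) * indicator {t<..t+h} s" for s
      proof (cases "s \<in> {t<..t+h}")
        case True
        hence "dist s t < \<delta>" using h by (auto simp: dist_real_def)
        hence "dist (D s) (D t) < - D t / 2" by (rule cl)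
        hence "D s \<le> D t / 2" by (auto simp: dist_real_def)
        thus ?thesis using True by simp
      qed simp
      have int2: "integrable lborel (\<lambda>s. (D t / 2) * indicator {t<..t+h} s)"
        using h by (intro Bochner_Integration.integrable_mult_right integrable_real_indicator) auto
      have "F (t + h) - F t = (\<integral>s. D s * indicator {t<..t+h} s \<partial>lborel)"
        using Ioc[of t "t + h"] h by simp
      also have "\<dots> \<le> (\<integral>s. (D t / 2) * indicator {t<..t+h} s \<partial>lborel)"
        using h by (intro integral_mono Iocint int2 le) auto
      also have "\<dots> = D t / 2 * h"
        using h by (simp add: measure_def)
      also have "\<dots> < 0" using d h by (simp add: mult_neg_pos)
      finally have "F (t + h) < F t" by simp
      moreover have "F t \<le> F (t + h)" using h by (intro Fmono) simp
      ultimately show False by simp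
    qed
  qed
  have dens_meas: "(\<lambda>t. ennreal (D t)) \<in> borel_measurable lborel" unfolding D_def by measurable
  have Ymeas: "Y \<in> measurable M lborel" using Ym by simp
  have emD: "emeasure (density lborel (\<lambda>t. ennreal (D t))) {..x} = ennreal (F x)" for x
  proof -
    have "emeasure (density lborel (\<lambda>t. ennreal (D t))) {..x} = (\<integral>\<^sup>+s. ennreal (D s) * indicator {..x} s \<partial>lborel)"
      by (rule emeasure_density[OF dens_meas]) simp
    also have "\<dots> = (\<integral>\<^sup>+s. ennreal (D s * indicator {..x} s) \<partial>lborel)"
      by (intro nn_integral_cong) (auto simp: indicator_def)
    also have "\<dots> = ennreal (\<integral>s. D s * indicator {..x} s \<partial>lborel)"
      by (rule nn_integral_eq_integral[OF Iint]) (auto simp: nonneg indicator_def)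
    finally show ?thesis by (simp add: II)
  qed
  have emY: "emeasure (distr M lborel Y) {..x} = ennreal (F x)" for x
  proof -
    have "emeasure (distr M lborel Y) {..x} = emeasure M (Y -` {..x} \<inter> space M)"
      by (rule emeasure_distr[OF Ymeas]) simp
    also have "Y -` {..x} \<inter> space M = {y \<in> space M. Y y \<le> x}" by auto
    also have "emeasure M \<dots> = ennreal (measure M {y \<in> space M. Y y \<le> x})"
      by (simp add: emeasure_eq_measure)
    finally show ?thesis by (simp add: Fcdf)
  qed
  have eq: "distr M lborel Y = density lborel (\<lambda>t. ennreal (D t))"
  proof (rule measure_eqI_generator_eq[where \<Omega> = UNIV and E = "range atMost" and A = "\<lambda>i. {..real i}"])
    show "Int_stable (range atMost :: real set set)"
      by (auto simp: Int_stable_def)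
    show "range atMost \<subseteq> Pow (UNIV :: real set)" by simp
    show "\<And>X. X \<in> range atMost \<Longrightarrow> emeasure (distr M lborel Y) X = emeasure (density lborel (\<lambda>t. ennreal (D t))) X"
      using emY emD by auto
    show "sets (distr M lborel Y) = sigma_sets UNIV (range atMost)"
      using sets_borel_atMost by simp
    show "sets (density lborel (\<lambda>t. ennreal (D t))) = sigma_sets UNIV (range atMost)"
      using sets_borel_atMost by simp
    show "range (\<lambda>i. {..real i}) \<subseteq> range atMost" by auto
    show "(\<Union>i. {..real i}) = (UNIV :: real set)"
      by (auto simp: real_arch_simple)
    show "\<And>i. emeasure (distr M lborel Y) {..real i} \<noteq> \<infinity>" using emY by simp
  qed
  show ?thesis
    using nonneg eq dens_meas Ymeas unfolding distributed_def D_def by simp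
qed

lemma (in prob_space) sum_distributed:
  fixes Y :: "nat \<Rightarrow> 'a \<Rightarrow> real"
  assumes I: "finite I" "I \<noteq> {}" and indep: "indep_vars (\<lambda>_. borel) Y I"
    and lam: "\<And>j. j \<in> I \<Longrightarrow> 0 < lam j" and nu: "\<And>j. j \<in> I \<Longrightarrow> 0 < nu j \<and> nu j \<le> 1"
    and single: "\<And>j. j \<in> I \<Longrightarrow> (\<forall>t. 0 \<le> DD lam nu {j} t) \<and> distributed M lborel (Y j) (\<lambda>t. ennreal (DD lam nu {j} t))"
  shows "(\<forall>t. 0 \<le> DD lam nu I t) \<and> distributed M lborel (\<lambda>x. \<Sum>j\<in>I. Y j x) (\<lambda>t. ennreal (DD lam nu I t))"
  using I indep lam nu single
proof (induction I rule: finite_ne_induct)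
  case (singleton i)
  thus ?case by simp
next
  case (insert i I)
  from insert.hyps have fI: "finite I" and nI: "I \<noteq> {}" and iI: "i \<notin> I" by auto
  have indI: "indep_vars (\<lambda>_. borel) Y I"
    using insert.prems(1) by (rule indep_vars_subset) auto
  have IH: "(\<forall>t. 0 \<le> DD lam nu I t) \<and> distributed M lborel (\<lambda>x. \<Sum>j\<in>I. Y j x) (\<lambda>t. ennreal (DD lam nu I t))"
    by (rule insert.IH[OF indI]) (use insert.prems in auto)
  have si: "(\<forall>t. 0 \<le> DD lam nu {i} t) \<and> distributed M lborel (Y i) (\<lambda>t. ennreal (DD lam nu {i} t))"
    using insert.prems(4) by simp
  have ind: "indep_var borel (Y i) borel (\<lambda>\<omega>. \<Sum>j\<in>I. Y j \<omega>)"
    by (rule indep_vars_sum[OF fI iI insert.prems(1)])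
  have conv: "distributed M lborel (\<lambda>x. Y i x + (\<Sum>j\<in>I. Y j x))
      (\<lambda>x. \<integral>\<^sup>+y. ennreal (DD lam nu {i} (x - y)) * ennreal (DD lam nu I y) \<partial>lborel)"
    by (rule distributed_convolution[OF ind conjunct2[OF si] conjunct2[OF IH]])
  have disj: "{i} \<inter> I = {}" using insert.hyps by auto
  have lam': "\<And>j. j \<in> {i} \<union> I \<Longrightarrow> 0 < lam j" using insert.prems by auto
  have nu': "\<And>j. j \<in> {i} \<union> I \<Longrightarrow> 0 < nu j \<and> nu j \<le> 1" using insert.prems by auto
  note DC = DD_conv[OF _ _ fI nI disj lam' nu', simplified]
  have val: "(\<integral>\<^sup>+y. ennreal (DD lam nu {i} (x - y)) * ennreal (DD lam nu I y) \<partial>lborel) = ennreal (DD lam nu (insert i I) x)" for x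
  proof -
    have "(\<integral>\<^sup>+y. ennreal (DD lam nu {i} (x - y)) * ennreal (DD lam nu I y) \<partial>lborel)
        = (\<integral>\<^sup>+y. ennreal (DD lam nu {i} (x - y) * DD lam nu I y) \<partial>lborel)"
      using si IH by (intro nn_integral_cong) (simp add: ennreal_mult)
    also have "\<dots> = ennreal (\<integral>y. DD lam nu {i} (x - y) * DD lam nu I y \<partial>lborel)"
      using si IH by (intro nn_integral_eq_integral DC(1)) auto
    also have "(\<integral>y. DD lam nu {i} (x - y) * DD lam nu I y \<partial>lborel) = DD lam nu (insert i I) x"
      using DC(2) by simp
    finally show ?thesis .
  qed
  have nonneg: "0 \<le> DD lam nu (insert i I) x" for x
  proof -
    have "0 \<le> (\<integral>y. DD lam nu {i} (x - y) * DD lam nu I y \<partial>lborel)"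
      using si IH by (intro integral_nonneg_AE AE_I2) auto
    thus ?thesis using DC(2) by simp
  qed
  have sumeq: "(\<lambda>x. Y i x + (\<Sum>j\<in>I. Y j x)) = (\<lambda>x. \<Sum>j\<in>insert i I. Y j x)"
    using insert.hyps by (simp add: fun_eq_iff)
  show ?case using conv nonneg unfolding val sumeq by simp
qed

lemma term_eq:
  fixes lam nu :: "nat \<Rightarrow> real"
  assumes n1: "1 \<le> n" and t: "0 < t" and nu1: "nu 1 = 1" and lamn: "lam n = 1"
    and \<kappa>: "\<kappa> \<in> kset {1..n} (m + n)"
  shows "kcf lam {1..n} \<kappa> * gk (kex nu {1..n} \<kappa>) t =
    (-1) ^ (n - 1) * lam 1 * ((-1) ^ (m + (n - 1)) *
      (pow0 t (real ((\<kappa>(1 := \<kappa> 1 - 1)) 1) + (\<Sum>j=2..n. real ((\<kappa>(1 := \<kappa> 1 - 1)) j) * nu j)) *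
       (\<Prod>j=1..n-1. lam j ^ (\<kappa>(1 := \<kappa> 1 - 1)) j) /
       Gamma (1 + real ((\<kappa>(1 := \<kappa> 1 - 1)) 1) + (\<Sum>j=2..n. real ((\<kappa>(1 := \<kappa> 1 - 1)) j) * nu j))))"
proof -
  define \<kappa>' where "\<kappa>' = \<kappa>(1 := \<kappa> 1 - 1)"
  have k0: "\<And>j. j \<notin> {1..n} \<Longrightarrow> \<kappa> j = 0" and k1: "\<And>j. j \<in> {1..n} \<Longrightarrow> 1 \<le> \<kappa> j"
    and ks: "(\<Sum>j\<in>{1..n}. \<kappa> j) = m + n" using \<kappa> by (auto simp: kset_def)
  have k11: "1 \<le> \<kappa> 1" using k1 n1 by auto
  have ins: "{1..n} = insert 1 {2..n}" using n1 by auto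
  define E where "E = real (\<kappa>' 1) + (\<Sum>j=2..n. real (\<kappa>' j) * nu j)"
  have s2: "(\<Sum>j=2..n. real (\<kappa>' j) * nu j) = (\<Sum>j=2..n. real (\<kappa> j) * nu j)"
    by (intro sum.cong) (auto simp: \<kappa>'_def)
  have kex: "kex nu {1..n} \<kappa> = 1 + E"
  proof -
    have "kex nu {1..n} \<kappa> = real (\<kappa> 1) * nu 1 + (\<Sum>j=2..n. real (\<kappa> j) * nu j)"
      unfolding kex_def ins by (subst sum.insert) auto
    also have "real (\<kappa> 1) = 1 + real (\<kappa>' 1)" using k11 by (simp add: \<kappa>'_def of_nat_diff)
    finally show ?thesis using nu1 s2 by (simp add: E_def)
  qed
  have gk: "gk (kex nu {1..n} \<kappa>) t = pow0 t E / Gamma (1 + E)"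
    unfolding kex using t by (simp add: gk_def pow0_def)
  have sign: "(\<Prod>j\<in>{1..n}. (-1::real) ^ (\<kappa> j + 1)) = (-1) ^ m"
  proof -
    have "(\<Prod>j\<in>{1..n}. (-1::real) ^ (\<kappa> j + 1)) = (-1) ^ (\<Sum>j\<in>{1..n}. \<kappa> j + 1)"
      by (simp add: power_sum)
    also have "(\<Sum>j\<in>{1..n}. \<kappa> j + 1) = m + 2 * n" unfolding sum.distrib ks by simp
    also have "(-1::real) ^ (m + 2 * n) = (-1) ^ m" by (simp add: power_add power_mult)
    finally show ?thesis .
  qed
  have lamprod: "(\<Prod>j\<in>{1..n}. lam j ^ \<kappa> j) = lam 1 * (\<Prod>j=1..n-1. lam j ^ \<kappa>' j)"
  proof -
    have insn: "{1..n} = insert n {1..n-1}" using n1 by auto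
    have "(\<Prod>j\<in>{1..n}. lam j ^ \<kappa> j) = lam n ^ \<kappa> n * (\<Prod>j=1..n-1. lam j ^ \<kappa> j)"
      unfolding insn by (subst prod.insert) auto
    also have "\<dots> = (\<Prod>j=1..n-1. lam j ^ \<kappa> j)" using lamn by simp
    also have "\<dots> = lam 1 * (\<Prod>j=1..n-1. lam j ^ \<kappa>' j)"
    proof (cases "n = 1")
      case True thus ?thesis using lamn by simp
    next
      case False
      hence ins1: "{1..n-1} = insert 1 {2..n-1}" using n1 by auto
      have p2: "(\<Prod>j=2..n-1. lam j ^ \<kappa>' j) = (\<Prod>j=2..n-1. lam j ^ \<kappa> j)"
        by (intro prod.cong) (auto simp: \<kappa>'_def)
      have "(\<Prod>j=1..n-1. lam j ^ \<kappa> j) = lam 1 ^ \<kappa> 1 * (\<Prod>j=2..n-1. lam j ^ \<kappa> j)"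
        unfolding ins1 by (subst prod.insert) auto
      moreover have "(\<Prod>j=1..n-1. lam j ^ \<kappa>' j) = lam 1 ^ (\<kappa> 1 - 1) * (\<Prod>j=2..n-1. lam j ^ \<kappa> j)"
        unfolding ins1 p2[symmetric] by (subst prod.insert) (auto simp: \<kappa>'_def)
      moreover have "lam 1 ^ \<kappa> 1 = lam 1 * lam 1 ^ (\<kappa> 1 - 1)"
        using k11 by (metis Suc_diff_le diff_Suc_1 power_Suc)
      ultimately show ?thesis by simp
    qed
    finally show ?thesis .
  qed
  have kcf: "kcf lam {1..n} \<kappa> = (-1) ^ m * (lam 1 * (\<Prod>j=1..n-1. lam j ^ \<kappa>' j))"
    unfolding kcf_def prod.distrib sign lamprod ..
  have sg: "(-1::real) ^ (n - 1) * (-1) ^ (m + (n - 1)) = (-1) ^ m"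
  proof -
    have "(-1::real) ^ (n - 1) * (-1) ^ (m + (n - 1)) = (-1) ^ m * ((-1) ^ (n - 1) * (-1) ^ (n - 1))"
      by (simp add: power_add mult_ac)
    also have "(-1::real) ^ (n - 1) * (-1) ^ (n - 1) = 1" by (simp add: power_add[symmetric])
    finally show ?thesis by simp
  qed
  have "kcf lam {1..n} \<kappa> * gk (kex nu {1..n} \<kappa>) t =
        ((-1) ^ (n - 1) * (-1) ^ (m + (n - 1))) * lam 1 * (pow0 t E * (\<Prod>j=1..n-1. lam j ^ \<kappa>' j) / Gamma (1 + E))"
    unfolding kcf gk sg by (simp add: mult_ac)
  also have "\<dots> = (-1) ^ (n - 1) * lam 1 * ((-1) ^ (m + (n - 1)) * (pow0 t E * (\<Prod>j=1..n-1. lam j ^ \<kappa>' j) / Gamma (1 + E)))"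
    by (simp add: mult_ac)
  finally show ?thesis unfolding \<kappa>'_def E_def by (simp add: add.assoc)
qed

lemma sum_split1: "1 \<le> n \<Longrightarrow> (\<Sum>j\<in>{1..n}. f j) = f 1 + (\<Sum>j\<in>{2..n}. f (j::nat))"
proof -
  assume "1 \<le> n"
  hence "{1..n} = insert 1 {2..n}" by auto
  thus ?thesis by (simp add: sum.insert)
qed

lemma series_identity:
  fixes lam nu :: "nat \<Rightarrow> real"
  assumes n1: "1 \<le> n" and t: "0 < t" and nu1: "nu 1 = 1" and lamn: "lam n = 1"
  shows "(\<Sum>\<kappa>\<in>kset {1..n} (m + n). kcf lam {1..n} \<kappa> * gk (kex nu {1..n} \<kappa>) t) =
         (-1) ^ (n - 1) * lam 1 * fW_term n lam nu t (m + (n - 1))"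
proof -
  define H where "H \<kappa>' = (-1) ^ (n - 1) * lam 1 * ((-1) ^ (m + (n - 1)) *
      (pow0 t (real (\<kappa>' 1) + (\<Sum>j=2..n. real (\<kappa>' j) * nu j)) *
       (\<Prod>j=1..n-1. lam j ^ \<kappa>' j) /
       Gamma (1 + real (\<kappa>' 1) + (\<Sum>j=2..n. real (\<kappa>' j) * nu j))))" for \<kappa>' :: "nat \<Rightarrow> nat"
  have "(\<Sum>\<kappa>\<in>kset {1..n} (m + n). kcf lam {1..n} \<kappa> * gk (kex nu {1..n} \<kappa>) t) =
        (\<Sum>\<kappa>\<in>kset {1..n} (m + n). H (\<kappa>(1 := \<kappa> 1 - 1)))"
    unfolding H_def by (intro sum.cong refl term_eq[where lam=lam and nu=nu and n=n, OF n1 t nu1 lamn])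
  also have "\<dots> = (\<Sum>\<kappa>'\<in>Lambda_set n (m + (n - 1)). H \<kappa>')"
  proof (rule sum.reindex_bij_witness[where i = "\<lambda>\<kappa>'. \<kappa>'(1 := \<kappa>' 1 + 1)" and j = "\<lambda>\<kappa>. \<kappa>(1 := \<kappa> 1 - 1)"])
    fix \<kappa> assume \<kappa>: "\<kappa> \<in> kset {1..n} (m + n)"
    have k0: "\<And>j. j \<notin> {1..n} \<Longrightarrow> \<kappa> j = 0" and k1: "\<And>j. j \<in> {1..n} \<Longrightarrow> 1 \<le> \<kappa> j"
      and ks: "(\<Sum>j\<in>{1..n}. \<kappa> j) = m + n" using \<kappa> by (auto simp: kset_def)
    have k11: "1 \<le> \<kappa> 1" using k1 n1 by auto
    show "(\<kappa>(1 := \<kappa> 1 - 1))(1 := (\<kappa>(1 := \<kappa> 1 - 1)) 1 + 1) = \<kappa>"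
      using k11 by (auto simp: fun_eq_iff)
    have s2: "(\<Sum>j\<in>{2..n}. (\<kappa>(1 := \<kappa> 1 - 1)) j) = (\<Sum>j\<in>{2..n}. \<kappa> j)"
      by (intro sum.cong) auto
    have "(\<Sum>j\<in>{1..n}. (\<kappa>(1 := \<kappa> 1 - 1)) j) = (\<kappa>(1 := \<kappa> 1 - 1)) 1 + (\<Sum>j\<in>{2..n}. (\<kappa>(1 := \<kappa> 1 - 1)) j)"
      by (rule sum_split1[OF n1])
    also have "\<dots> = (\<kappa> 1 - 1) + (\<Sum>j\<in>{2..n}. \<kappa> j)" by (simp only: s2 fun_upd_same)
    also have "\<dots> = m + (n - 1)" using ks sum_split1[OF n1, of \<kappa>] k11 n1 by simp
    finally show "\<kappa>(1 := \<kappa> 1 - 1) \<in> Lambda_set n (m + (n - 1))"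
      using k0 k1 by (auto simp: Lambda_set_def)
    show "H (\<kappa>(1 := \<kappa> 1 - 1)) = H (\<kappa>(1 := \<kappa> 1 - 1))" ..
  next
    fix \<kappa>' assume \<kappa>': "\<kappa>' \<in> Lambda_set n (m + (n - 1))"
    have k0: "\<And>j. j \<notin> {1..n} \<Longrightarrow> \<kappa>' j = 0" and k1: "\<And>j. j \<in> {2..n} \<Longrightarrow> 1 \<le> \<kappa>' j"
      and ks: "(\<Sum>j\<in>{1..n}. \<kappa>' j) = m + (n - 1)" using \<kappa>' by (auto simp: Lambda_set_def)
    show "(\<kappa>'(1 := \<kappa>' 1 + 1))(1 := (\<kappa>'(1 := \<kappa>' 1 + 1)) 1 - 1) = \<kappa>'"
      by (auto simp: fun_eq_iff)
    have s2: "(\<Sum>j\<in>{2..n}. (\<kappa>'(1 := \<kappa>' 1 + 1)) j) = (\<Sum>j\<in>{2..n}. \<kappa>' j)"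
      by (intro sum.cong) auto
    have "(\<Sum>j\<in>{1..n}. (\<kappa>'(1 := \<kappa>' 1 + 1)) j) = (\<kappa>'(1 := \<kappa>' 1 + 1)) 1 + (\<Sum>j\<in>{2..n}. (\<kappa>'(1 := \<kappa>' 1 + 1)) j)"
      by (rule sum_split1[OF n1])
    also have "\<dots> = (\<kappa>' 1 + 1) + (\<Sum>j\<in>{2..n}. \<kappa>' j)" by (simp only: s2 fun_upd_same)
    also have "\<dots> = m + n" using ks sum_split1[OF n1, of \<kappa>'] n1 by simp
    finally show "\<kappa>'(1 := \<kappa>' 1 + 1) \<in> kset {1..n} (m + n)"
      using k0 k1 n1 by (auto simp: kset_def)
  qed
  also have "\<dots> = (-1) ^ (n - 1) * lam 1 * fW_term n lam nu t (m + (n - 1))"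
    unfolding H_def fW_term_def by (simp add: sum_distrib_left)
  finally show ?thesis .
qed

lemma DD_nonpos: "t \<le> 0 \<Longrightarrow> DD lam nu J t = 0"
proof -
  assume t: "t \<le> 0"
  have "(\<Sum>\<kappa>\<in>kset J k. kcf lam J \<kappa> * gk (kex nu J \<kappa>) t) = 0" for k
    using t by (simp add: gk_def)
  thus ?thesis by (simp add: DD_def)
qed

lemma kset_small:
  assumes "finite J" "k < card J" shows "kset J k = {}"
proof (rule ccontr)
  assume "kset J k \<noteq> {}"
  then obtain \<kappa> where \<kappa>: "\<kappa> \<in> kset J k" by auto
  have "card J = (\<Sum>j\<in>J. 1)" by simp
  also have "\<dots> \<le> (\<Sum>j\<in>J. \<kappa> j)" using \<kappa> by (intro sum_mono) (auto simp: kset_def)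
  also have "\<dots> = k" using \<kappa> by (simp add: kset_def)
  finally show False using assms by simp
qed

lemma DD_series:
  fixes lam nu :: "nat \<Rightarrow> real"
  assumes n1: "1 \<le> n" and t: "0 < t" and nu1: "nu 1 = 1" and lamn: "lam n = 1"
    and lam: "\<And>j. j \<in> {1..n} \<Longrightarrow> 0 < lam j" and nu: "\<And>j. j \<in> {1..n} \<Longrightarrow> 0 < nu j \<and> nu j \<le> 1"
  shows "summable (\<lambda>m. fW_term n lam nu t (m + (n - 1)))"
    and "DD lam nu {1..n} t = (-1) ^ (n - 1) * lam 1 * (\<Sum>m. fW_term n lam nu t (m + (n - 1)))"
proof -
  define A where "A k = (\<Sum>\<kappa>\<in>kset {1..n} k. kcf lam {1..n} \<kappa> * gk (kex nu {1..n} \<kappa>) t)" for k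
  define c where "c = (-1) ^ (n - 1) * lam 1"
  have J: "finite {1..n}" "{1..n} \<noteq> {}" using n1 by auto
  have l1: "0 < lam 1" using lam n1 by auto
  have c0: "c \<noteq> 0" using l1 by (simp add: c_def)
  have absA: "\<bar>A k\<bar> \<le> (\<Sum>\<kappa>\<in>kset {1..n} k. \<bar>kcf lam {1..n} \<kappa>\<bar> * gk (kex nu {1..n} \<kappa>) t)" for k
  proof -
    have "\<bar>A k\<bar> \<le> (\<Sum>\<kappa>\<in>kset {1..n} k. \<bar>kcf lam {1..n} \<kappa> * gk (kex nu {1..n} \<kappa>) t\<bar>)"
      unfolding A_def by (rule sum_abs)
    also have "\<dots> = (\<Sum>\<kappa>\<in>kset {1..n} k. \<bar>kcf lam {1..n} \<kappa>\<bar> * gk (kex nu {1..n} \<kappa>) t)"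
    proof (intro sum.cong refl)
      fix \<kappa> assume "\<kappa> \<in> kset {1..n} k"
      hence "0 < kex nu {1..n} \<kappa>" using kex_pos[OF J] nu by blast
      hence "0 \<le> gk (kex nu {1..n} \<kappa>) t" by (rule gk_nonneg)
      thus "\<bar>kcf lam {1..n} \<kappa> * gk (kex nu {1..n} \<kappa>) t\<bar> = \<bar>kcf lam {1..n} \<kappa>\<bar> * gk (kex nu {1..n} \<kappa>) t"
        by (simp add: abs_mult)
    qed
    finally show ?thesis .
  qed
  have sA: "summable A"
  proof (rule summable_rabs_cancel, rule summable_comparison_test[OF _ kset_abs_summable[OF J]])
    show "\<exists>N. \<forall>k\<ge>N. norm \<bar>A k\<bar> \<le> (\<Sum>\<kappa>\<in>kset {1..n} k. \<bar>kcf lam {1..n} \<kappa>\<bar> * gk (kex nu {1..n} \<kappa>) t)"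
      using absA by auto
  qed (use lam nu in auto)
  have A0: "A k = 0" if "k < n" for k
    using kset_small[OF J(1)] that by (simp add: A_def)
  have Ashift: "A (m + n) = c * fW_term n lam nu t (m + (n - 1))" for m
    unfolding A_def c_def by (rule series_identity[where lam=lam and nu=nu and n=n, OF n1 t nu1 lamn])
  have sAs: "summable (\<lambda>m. A (m + n))" using sA by (subst summable_iff_shift)
  hence sF: "summable (\<lambda>m. c * fW_term n lam nu t (m + (n - 1)))" by (simp add: Ashift)
  show sW: "summable (\<lambda>m. fW_term n lam nu t (m + (n - 1)))"
    using summable_mult[OF sF, of "1 / c"] c0 by simp
  have "DD lam nu {1..n} t = suminf A" unfolding DD_def A_def[abs_def] by (rule refl)
  also have "\<dots> = (\<Sum>m. A (m + n)) + (\<Sum>i<n. A i)" by (rule suminf_split_initial_segment[OF sA])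
  also have "(\<Sum>i<n. A i) = 0" using A0 by simp
  also have "(\<Sum>m. A (m + n)) = (\<Sum>m. c * fW_term n lam nu t (m + (n - 1)))" by (simp add: Ashift)
  also have "\<dots> = c * (\<Sum>m. fW_term n lam nu t (m + (n - 1)))" by (rule suminf_mult[OF sW])
  finally show "DD lam nu {1..n} t = (-1) ^ (n - 1) * lam 1 * (\<Sum>m. fW_term n lam nu t (m + (n - 1)))"
    by (simp add: c_def)
qed

lemma fW_zero:
  fixes lam nu :: "nat \<Rightarrow> real"
  assumes n1: "1 \<le> n" and m: "1 \<le> m" and nu: "\<And>j. j \<in> {1..n} \<Longrightarrow> 0 < nu j"
  shows "fW_term n lam nu 0 (m + (n - 1)) = 0"
proof -
  have "pow0 0 (real (\<kappa> 1) + (\<Sum>j=2..n. real (\<kappa> j) * nu j)) = 0" if \<kappa>: "\<kappa> \<in> Lambda_set n (m + (n - 1))" for \<kappa>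
  proof -
    define E where "E = real (\<kappa> 1) + (\<Sum>j=2..n. real (\<kappa> j) * nu j)"
    have nn: "\<forall>j\<in>{2..n}. 0 \<le> real (\<kappa> j) * nu j"
    proof
      fix j assume "j \<in> {2..n}"
      hence "0 < nu j" using nu by auto
      thus "0 \<le> real (\<kappa> j) * nu j" by simp
    qed
    have "E \<noteq> 0"
    proof
      assume E0: "E = 0"
      have S0: "(\<Sum>j=2..n. real (\<kappa> j) * nu j) \<ge> 0" using nn by (intro sum_nonneg) auto
      hence k1: "\<kappa> 1 = 0" and S: "(\<Sum>j=2..n. real (\<kappa> j) * nu j) = 0" using E0 unfolding E_def by linarith+
      have h: "\<forall>j\<in>{2..n}. real (\<kappa> j) * nu j = 0"
        using S nn by (subst (asm) sum_nonneg_eq_0_iff) auto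
      have kj: "\<forall>j\<in>{2..n}. \<kappa> j = 0"
      proof
        fix j assume j: "j \<in> {2..n}"
        hence "0 < nu j" using nu by auto
        thus "\<kappa> j = 0" using h j by auto
      qed
      have "(\<Sum>j\<in>{1..n}. \<kappa> j) = \<kappa> 1 + (\<Sum>j\<in>{2..n}. \<kappa> j)" by (rule sum_split1[OF n1])
      also have "\<dots> = 0" using k1 kj by simp
      finally show False using \<kappa> m by (simp add: Lambda_set_def)
    qed
    thus ?thesis by (simp add: pow0_def E_def)
  qed
  thus ?thesis by (simp add: fW_term_def)
qed

theorem corollary5p2:
  fixes M :: "'a measure" and Y :: "nat \<Rightarrow> 'a \<Rightarrow> real"
    and n :: nat and lam nu :: "nat \<Rightarrow> real"
  assumes "prob_space M"
    and "n \<ge> 1"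
    and "\<And>j. j \<in> {1..n} \<Longrightarrow> Y j \<in> borel_measurable M"
    and "prob_space.indep_vars M (\<lambda>_. borel) Y {1..n}"
    and "\<And>j. j \<in> {1..n} \<Longrightarrow> lam j > 0"
    and "\<And>j. j \<in> {1..n} \<Longrightarrow> 0 < nu j \<and> nu j \<le> 1"
    and "nu 1 = 1" and "lam n = 1"
    and "\<And>j t. j \<in> {1..n} \<Longrightarrow> 0 \<le> t \<Longrightarrow>
           measure M {x \<in> space M. Y j x \<le> t} = 1 - mittag_leffler (nu j) (- lam j * t powr nu j)"
  shows "(\<forall>t\<ge>0. summable (\<lambda>m. fW_term n lam nu t (m + (n - 1)))) \<and>
         distributed M lborel (\<lambda>x. \<Sum>j=1..n. Y j x)
           (\<lambda>t. ennreal (if 0 \<le> t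
                  then (-1) ^ (n - 1) * lam 1 * (\<Sum>m. fW_term n lam nu t (m + (n - 1)))
                  else 0))"
proof -
  note ps = assms(1) and n1 = assms(2) and Ym = assms(3) and ind = assms(4) and lam = assms(5)
    and nu = assms(6) and nu1 = assms(7) and lamn = assms(8) and cdf = assms(9)
  interpret prob_space M by (rule ps)
  have single: "(\<forall>t. 0 \<le> DD lam nu {j} t) \<and> distributed M lborel (Y j) (\<lambda>t. ennreal (DD lam nu {j} t))"
    if j: "j \<in> {1..n}" for j
    using single_distributed[where lam=lam and nu=nu and j=j, OF lam[OF j] conjunct1[OF nu[OF j]] conjunct2[OF nu[OF j]] Ym[OF j] cdf[OF j]] .
  have S: "(\<forall>t. 0 \<le> DD lam nu {1..n} t) \<and> distributed M lborel (\<lambda>x. \<Sum>j\<in>{1..n}. Y j x) (\<lambda>t. ennreal (DD lam nu {1..n} t))"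
    by (rule sum_distributed) (use n1 ind lam nu single in auto)
  have summ: "\<forall>t\<ge>0. summable (\<lambda>m. fW_term n lam nu t (m + (n - 1)))"
  proof (intro allI impI)
    fix t :: real assume t: "0 \<le> t"
    show "summable (\<lambda>m. fW_term n lam nu t (m + (n - 1)))"
    proof (cases "t = 0")
      case True
      have "fW_term n lam nu t (m + (n - 1)) = 0" if "m \<notin> {0}" for m
        using fW_zero[OF n1, of m nu lam] that nu True by auto
      thus ?thesis by (intro summable_finite[of "{0}"]) auto
    next
      case False
      hence tp: "0 < t" using t by simp
      show ?thesis by (rule DD_series(1)[where lam=lam and nu=nu and n=n, OF n1 tp nu1 lamn lam nu])
    qed
  qed
  define g where "g t = ennreal (if 0 \<le> t then (-1) ^ (n - 1) * lam 1 * (\<Sum>m. fW_term n lam nu t (m + (n - 1))) else 0)" for t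
  have fg: "ennreal (DD lam nu {1..n} t) = g t" if "t \<noteq> 0" for t
  proof (cases "0 < t")
    case True
    thus ?thesis using DD_series(2)[where lam=lam and nu=nu and n=n, OF n1 True nu1 lamn lam nu] by (simp add: g_def)
  next
    case False
    thus ?thesis using that DD_nonpos[of t lam nu "{1..n}"] by (simp add: g_def)
  qed
  have gform: "g = (\<lambda>t. if t = 0 then g 0 else ennreal (DD lam nu {1..n} t))"
    using fg by (auto simp: fun_eq_iff)
  have gm: "g \<in> borel_measurable lborel" by (subst gform) measurable
  have fm: "(\<lambda>t. ennreal (DD lam nu {1..n} t)) \<in> borel_measurable lborel" by measurable
  have ae: "AE t in lborel. ennreal (DD lam nu {1..n} t) = g t"
    using AE_lborel_singleton[of 0] by eventually_elim (use fg in auto)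
  have "distributed M lborel (\<lambda>x. \<Sum>j\<in>{1..n}. Y j x) g"
    using conjunct2[OF S] distributed_cong_density[OF ae gm fm, of M "\<lambda>x. \<Sum>j\<in>{1..n}. Y j x"] by blast
  thus ?thesis using summ unfolding g_def by simp
qed


end
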